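(* Let $\rho\in\mathbb R$, let $\kappa_{\mathbf a}:\mathbb H_\rho\times\mathbb H_\rho\to\mathbb C$ be a positive semi-definite Dirichlet series kernel with coefficient matrix $\mathbf a=(a_{m,n})$ and associated reproducing kernel Hilbert space $\mathscr H_{\mathbf a}$. Let $f(s)=\sum_{n\ge1}\hat f(n)n^{-s}$ be a Dirichlet series convergent at every $s\in\mathbb H_\rho$. Then $f\in\mathscr H_{\mathbf a}$ if and only if there exists a real number $c\ge0$ such that the matrix $\big(c^2a_{m,n}-\hat f(m)\overline{\hat f(n)}\big)_{m,n=1}^\infty$ is formally positive semi-definite.
   Context: $\mathbb H_\rho=\{\Re s>\rho\}$. $\kappa_{\mathbf a}(s,u)=\sum_{m,n\ge1}a_{m,n}m^{-s}n^{-\bar u}$ is a Dirichlet series kernel on $\mathbb H_\rho$ if $(s,u)\mapsto\kappa_{\mathbf a}(s,\bar u)$ is regularly convergent on $\mathbb H_\rho\times\mathbb H_\rho$ (the double series converges at each point and every row and column series converges there). $\mathscr H_{\mathbf a}$ is the Hilbert space of functions on $\mathbb H_\rho$ with $\kappa_{\mathbf a}(\cdot,t)\in\mathscr H_{\mathbf a}$ and $\langle f,\kappa_{\mathbf a}(\cdot,t)\rangle=f(t)$. An infinite matrix is formally positive semi-definite if all its finite principal sections $(x_{m,n})_{m,n\in F}$, $F\subset\mathbb N$ finite, are positive semi-definite. *)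

theory Defs
  imports "HOL-Analysis.Analysis"
begin

definition halfplane :: "real \<Rightarrow> complex set" where
  "halfplane \<rho> = {s. Re s > \<rho>}"

definition cnonneg :: "complex \<Rightarrow> bool" where
  "cnonneg z \<longleftrightarrow> Im z = 0 \<and> 0 \<le> Re z"

definition summable1 :: "(nat \<Rightarrow> complex) \<Rightarrow> bool" where
  "summable1 g \<longleftrightarrow> summable (\<lambda>n. if n = 0 then 0 else g n)"

definition suminf1 :: "(nat \<Rightarrow> complex) \<Rightarrow> complex" where
  "suminf1 g = (\<Sum>n. if n = 0 then 0 else g n)"

definition rect_sum :: "(nat \<Rightarrow> nat \<Rightarrow> complex) \<Rightarrow> nat \<times> nat \<Rightarrow> complex" where
  "rect_sum b = (\<lambda>(M, N). \<Sum>m\<in>{1..M}. \<Sum>n\<in>{1..N}. b m n)"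

definition regularly_convergent :: "(nat \<Rightarrow> nat \<Rightarrow> complex) \<Rightarrow> bool" where
  "regularly_convergent b \<longleftrightarrow>
     (\<exists>L. (rect_sum b \<longlongrightarrow> L) (sequentially \<times>\<^sub>F sequentially)) \<and>
     (\<forall>m\<ge>1. summable1 (\<lambda>n. b m n)) \<and>
     (\<forall>n\<ge>1. summable1 (\<lambda>m. b m n))"

definition dk_term :: "(nat \<Rightarrow> nat \<Rightarrow> complex) \<Rightarrow> complex \<Rightarrow> complex \<Rightarrow> nat \<Rightarrow> nat \<Rightarrow> complex" where
  "dk_term a s u m n = a m n * of_nat m powr (- s) * of_nat n powr (- cnj u)"

definition dkernel :: "(nat \<Rightarrow> nat \<Rightarrow> complex) \<Rightarrow> complex \<Rightarrow> complex \<Rightarrow> complex" where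
  "dkernel a s u = Lim (sequentially \<times>\<^sub>F sequentially) (rect_sum (dk_term a s u))"

text \<open>kappa_a is a Dirichlet series kernel on H_rho: (s,u) |-> kappa_a(s, conj u)
  is regularly convergent on H_rho x H_rho (equivalently the series of kappa_a(s,u)
  is regularly convergent for all s,u in H_rho, as conj preserves H_rho).\<close>
definition dirichlet_series_kernel :: "real \<Rightarrow> (nat \<Rightarrow> nat \<Rightarrow> complex) \<Rightarrow> bool" where
  "dirichlet_series_kernel \<rho> a \<longleftrightarrow>
     (\<forall>s\<in>halfplane \<rho>. \<forall>u\<in>halfplane \<rho>. regularly_convergent (dk_term a s (cnj u)))"

definition psd_kernel :: "complex set \<Rightarrow> (complex \<Rightarrow> complex \<Rightarrow> complex) \<Rightarrow> bool" where
  "psd_kernel D K \<longleftrightarrow>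
     (\<forall>F c. finite F \<and> F \<subseteq> D \<longrightarrow>
        cnonneg (\<Sum>t\<in>F. \<Sum>u\<in>F. c t * cnj (c u) * K u t))"

text \<open>Finite linear combinations of kernel functions, encoded by finitely supported
  coefficient functions w: the function s |-> sum_t w t * K(s,t), with squared norm
  ||sum_t w t K(.,t)||^2 = sum_{t,u} w t * conj (w u) * K(u,t).\<close>
definition supp_c :: "(complex \<Rightarrow> complex) \<Rightarrow> complex set" where
  "supp_c w = {t. w t \<noteq> 0}"

definition kcomb :: "(complex \<Rightarrow> complex \<Rightarrow> complex) \<Rightarrow> (complex \<Rightarrow> complex) \<Rightarrow> complex \<Rightarrow> complex" where
  "kcomb K w s = (\<Sum>t\<in>supp_c w. w t * K s t)"

definition knormsq :: "(complex \<Rightarrow> complex \<Rightarrow> complex) \<Rightarrow> (complex \<Rightarrow> complex) \<Rightarrow> real" where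
  "knormsq K w = Re (\<Sum>t\<in>supp_c w. \<Sum>u\<in>supp_c w. w t * cnj (w u) * K u t)"

text \<open>Membership in the reproducing kernel Hilbert space H(K) on D
  (Moore-Aronszajn construction): f is the pointwise limit on D of a norm-Cauchy
  sequence of finite linear combinations of the kernel functions K(.,t), t in D.\<close>
definition in_rkhs :: "complex set \<Rightarrow> (complex \<Rightarrow> complex \<Rightarrow> complex) \<Rightarrow> (complex \<Rightarrow> complex) \<Rightarrow> bool" where
  "in_rkhs D K f \<longleftrightarrow>
     (\<exists>W :: nat \<Rightarrow> complex \<Rightarrow> complex.
        (\<forall>k. finite (supp_c (W k)) \<and> supp_c (W k) \<subseteq> D) \<and>
        (\<forall>\<epsilon>>0. \<exists>N. \<forall>i\<ge>N. \<forall>j\<ge>N. knormsq K (\<lambda>t. W i t - W j t) < \<epsilon>) \<and>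
        (\<forall>s\<in>D. (\<lambda>k. kcomb K (W k) s) \<longlonglongrightarrow> f s))"

definition formally_psd :: "(nat \<Rightarrow> nat \<Rightarrow> complex) \<Rightarrow> bool" where
  "formally_psd x \<longleftrightarrow>
     (\<forall>F v. finite F \<and> F \<subseteq> {1..} \<longrightarrow>
        cnonneg (\<Sum>m\<in>F. \<Sum>n\<in>F. cnj (v m) * x m n * v n))"

definition dir_term :: "(nat \<Rightarrow> complex) \<Rightarrow> complex \<Rightarrow> nat \<Rightarrow> complex" where
  "dir_term fh s n = fh n * of_nat n powr (- s)"

end

theory Submission
  imports Defs
begin


definition Bf :: "complex set \<Rightarrow> (complex \<Rightarrow> complex \<Rightarrow> complex) \<Rightarrow> (complex \<Rightarrow> complex) \<Rightarrow> (complex \<Rightarrow> complex) \<Rightarrow> complex" where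
  "Bf S K w v = (\<Sum>t\<in>S. \<Sum>u\<in>S. w t * cnj (v u) * K u t)"

lemma cnonneg_iff: "cnonneg z \<longleftrightarrow> z = complex_of_real (Re z) \<and> Re z \<ge> 0"
  unfolding cnonneg_def by (auto simp: complex_eq_iff)

lemma supp_subD: "supp_c w \<subseteq> S \<Longrightarrow> t \<notin> S \<Longrightarrow> w t = 0"
  unfolding supp_c_def by auto

lemma Bf_mono:
  assumes "finite S'" "S \<subseteq> S'" "supp_c w \<subseteq> S" "supp_c v \<subseteq> S"
  shows "Bf S' K w v = Bf S K w v"
proof -
  have fS: "finite S" using assms finite_subset by blast
  have "Bf S' K w v = (\<Sum>t\<in>S. \<Sum>u\<in>S'. w t * cnj (v u) * K u t)"
    unfolding Bf_def
    by (rule sum.mono_neutral_right) (use assms fS supp_subD[OF assms(3)] in auto)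
  also have "\<dots> = Bf S K w v"
    unfolding Bf_def
    by (rule sum.cong[OF refl], rule sum.mono_neutral_right) (use assms fS supp_subD in auto)
  finally show ?thesis .
qed

lemma Bf_eq:
  assumes "finite S" "finite T" "supp_c w \<subseteq> S" "supp_c v \<subseteq> S" "supp_c w \<subseteq> T" "supp_c v \<subseteq> T"
  shows "Bf S K w v = Bf T K w v"
proof -
  have "Bf (S \<union> T) K w v = Bf S K w v" by (rule Bf_mono) (use assms in auto)
  moreover have "Bf (S \<union> T) K w v = Bf T K w v" by (rule Bf_mono) (use assms in auto)
  ultimately show ?thesis by simp
qed

lemma Bf_lin1: "Bf S K (\<lambda>t. \<alpha> * w t + \<beta> * v t) z = \<alpha> * Bf S K w z + \<beta> * Bf S K v z"
proof -
  have "\<And>t u. (\<alpha> * w t + \<beta> * v t) * cnj (z u) * K u t = \<alpha> * (w t * cnj (z u) * K u t) + \<beta> * (v t * cnj (z u) * K u t)"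
    by (simp add: algebra_simps)
  then show ?thesis unfolding Bf_def by (simp add: sum.distrib sum_distrib_left)
qed

lemma Bf_lin2: "Bf S K z (\<lambda>t. \<alpha> * w t + \<beta> * v t) = cnj \<alpha> * Bf S K z w + cnj \<beta> * Bf S K z v"
proof -
  have "\<And>t u. z t * cnj (\<alpha> * w u + \<beta> * v u) * K u t = cnj \<alpha> * (z t * cnj (w u) * K u t) + cnj \<beta> * (z t * cnj (v u) * K u t)"
    by (simp add: algebra_simps)
  then show ?thesis unfolding Bf_def by (simp add: sum.distrib sum_distrib_left)
qed

lemma psdD: "psd_kernel D K \<Longrightarrow> finite F \<Longrightarrow> F \<subseteq> D \<Longrightarrow> cnonneg (\<Sum>t\<in>F. \<Sum>u\<in>F. c t * cnj (c u) * K u t)"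
  unfolding psd_kernel_def by blast

lemma psd_herm:
  assumes "psd_kernel D K" "t \<in> D" "u \<in> D"
  shows "K u t = cnj (K t u)"
proof (cases "t = u")
  case True
  have "cnonneg (K t t)"
    using psdD[OF assms(1), of "{t}" "\<lambda>_. 1"] assms by simp
  then show ?thesis unfolding True by (simp add: cnonneg_def complex_eq_iff)
next
  case False
  have tt: "cnonneg (K t t)"
    using psdD[OF assms(1), of "{t}" "\<lambda>_. 1"] assms by simp
  have uu: "cnonneg (K u u)"
    using psdD[OF assms(1), of "{u}" "\<lambda>_. 1"] assms by simp
  have 1: "cnonneg (K t t + K u t + (K t u + K u u))"
    using psdD[OF assms(1), of "{t,u}" "\<lambda>_. 1"] assms False by simp
  have 2: "cnonneg (K t t + \<i> * K t u + (- \<i> * K u t + K u u))"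
    using psdD[OF assms(1), of "{t,u}" "\<lambda>x. if x = t then 1 else \<i>"] assms False by (simp add: algebra_simps)
  from tt uu 1 2 show ?thesis
    by (simp add: cnonneg_def complex_eq_iff)
qed

lemma Bf_herm:
  assumes "psd_kernel D K" "S \<subseteq> D"
  shows "Bf S K v w = cnj (Bf S K w v)"
proof -
  have "cnj (Bf S K w v) = (\<Sum>t\<in>S. \<Sum>u\<in>S. cnj (w t) * v u * cnj (K u t))"
    unfolding Bf_def by (simp add: cnj_sum)
  also have "\<dots> = (\<Sum>t\<in>S. \<Sum>u\<in>S. cnj (w t) * v u * K t u)"
  proof (intro sum.cong refl)
    fix t u assume "t \<in> S" "u \<in> S"
    then have "K t u = cnj (K u t)" using psd_herm[OF assms(1), of u t] assms(2) by blast
    then show "cnj (w t) * v u * cnj (K u t) = cnj (w t) * v u * K t u" by simp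
  qed
  also have "\<dots> = Bf S K v w"
    unfolding Bf_def by (subst sum.swap) (simp add: algebra_simps)
  finally show ?thesis by simp
qed

lemma Bf_psd:
  assumes "psd_kernel D K" "finite S" "S \<subseteq> D"
  shows "cnonneg (Bf S K w w)"
  unfolding Bf_def by (rule psdD[OF assms])

lemma Bf_real: "psd_kernel D K \<Longrightarrow> finite S \<Longrightarrow> S \<subseteq> D \<Longrightarrow> Bf S K w w = complex_of_real (Re (Bf S K w w))"
  using Bf_psd[of D K S w] unfolding cnonneg_iff by blast

lemma Bf_expand:
  assumes "psd_kernel D K" "finite S" "S \<subseteq> D"
  shows "Re (Bf S K (\<lambda>t. w t + l * v t) (\<lambda>t. w t + l * v t)) =
     Re (Bf S K w w) + 2 * Re (cnj l * Bf S K w v) + (cmod l)\<^sup>2 * Re (Bf S K v v)"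
proof -
  have e: "Bf S K (\<lambda>t. w t + l * v t) (\<lambda>t. w t + l * v t) =
     Bf S K w w + cnj l * Bf S K w v + l * Bf S K v w + l * cnj l * Bf S K v v"
    using Bf_lin1[of S K 1 w l v] Bf_lin2[of S K _ 1 w l v] by (simp add: algebra_simps)
  have h: "Bf S K v w = cnj (Bf S K w v)" using Bf_herm assms by blast
  have r: "Bf S K v v = complex_of_real (Re (Bf S K v v))" using Bf_real assms by blast
  have m: "l * cnj l = complex_of_real ((cmod l)\<^sup>2)" by (rule complex_norm_square[symmetric])
  show ?thesis unfolding e h m
    by (subst r) (simp add: algebra_simps)
qed

lemma Bf_nonneg: "psd_kernel D K \<Longrightarrow> finite S \<Longrightarrow> S \<subseteq> D \<Longrightarrow> Re (Bf S K w w) \<ge> 0"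
  using Bf_psd[of D K S w] unfolding cnonneg_def by blast

lemma Bf_CS:
  assumes "psd_kernel D K" "finite S" "S \<subseteq> D"
  shows "(cmod (Bf S K w v))\<^sup>2 \<le> Re (Bf S K w w) * Re (Bf S K v v)"
proof -
  let ?b = "Bf S K w v"
  have key: "0 \<le> Re (Bf S K w w) - 2 * e * (cmod ?b)\<^sup>2 + e\<^sup>2 * (cmod ?b)\<^sup>2 * Re (Bf S K v v)" for e :: real
  proof -
    have "0 \<le> Re (Bf S K (\<lambda>t. w t + (- of_real e * ?b) * v t) (\<lambda>t. w t + (- of_real e * ?b) * v t))"
      using Bf_nonneg assms by blast
    also have "\<dots> = Re (Bf S K w w) + 2 * Re (cnj (- of_real e * ?b) * ?b) + (cmod (- of_real e * ?b))\<^sup>2 * Re (Bf S K v v)"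
      by (rule Bf_expand[OF assms])
    also have "cnj (- of_real e * ?b) * ?b = - of_real (e * (cmod ?b)\<^sup>2)"
    proof -
      have bb: "cnj ?b * ?b = of_real ((cmod ?b)^2)" using complex_norm_square[of ?b] by (simp add: mult.commute)
      have "cnj (- of_real e * ?b) * ?b = - of_real e * (cnj ?b * ?b)" by simp
      also have "\<dots> = - of_real (e * (cmod ?b)\<^sup>2)" unfolding bb by simp
      finally show ?thesis .
    qed
    also have "(cmod (- of_real e * ?b))\<^sup>2 = e\<^sup>2 * (cmod ?b)\<^sup>2"
      by (simp add: norm_mult power_mult_distrib)
    finally show ?thesis by simp
  qed
  show ?thesis
  proof (cases "?b = 0")
    case True then show ?thesis using Bf_nonneg[OF assms, of w] Bf_nonneg[OF assms, of v] by simp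
  next
    case False
    hence bpos: "(cmod ?b)\<^sup>2 > 0" by simp
    show ?thesis
    proof (cases "Re (Bf S K v v) = 0")
      case True
      have "0 \<le> Re (Bf S K w w) - 2 * ((Re (Bf S K w w) + 1) / (cmod ?b)\<^sup>2) * (cmod ?b)\<^sup>2"
        using key[of "(Re (Bf S K w w) + 1) / (cmod ?b)\<^sup>2"] True by simp
      then have False using bpos Bf_nonneg[OF assms, of w] by simp
      then show ?thesis ..
    next
      case False
      have vpos: "Re (Bf S K v v) > 0" using False Bf_nonneg[OF assms, of v] by simp
      have "0 \<le> Re (Bf S K w w) - 2 * (1 / Re (Bf S K v v)) * (cmod ?b)\<^sup>2 + (1 / Re (Bf S K v v))\<^sup>2 * (cmod ?b)\<^sup>2 * Re (Bf S K v v)"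
        by (rule key)
      also have "\<dots> = Re (Bf S K w w) - (cmod ?b)\<^sup>2 / Re (Bf S K v v)"
        using vpos by (simp add: field_simps power2_eq_square)
      finally show ?thesis using vpos by (simp add: field_simps)
    qed
  qed
qed


lemma Bf_split:
  assumes "finite A" "finite B" "supp_c w \<subseteq> A" "supp_c v \<subseteq> B"
  shows "Bf (A \<union> B) K w v = (\<Sum>t\<in>A. \<Sum>u\<in>B. w t * cnj (v u) * K u t)"
proof -
  have "Bf (A \<union> B) K w v = (\<Sum>t\<in>A. \<Sum>u\<in>A \<union> B. w t * cnj (v u) * K u t)"
    unfolding Bf_def
    by (rule sum.mono_neutral_right) (use assms supp_subD[OF assms(3)] in auto)
  also have "\<dots> = (\<Sum>t\<in>A. \<Sum>u\<in>B. w t * cnj (v u) * K u t)"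
    by (rule sum.cong[OF refl], rule sum.mono_neutral_right) (use assms supp_subD[OF assms(4)] in auto)
  finally show ?thesis .
qed

lemma knormsq_Bf:
  assumes "finite S" "supp_c w \<subseteq> S"
  shows "knormsq K w = Re (Bf S K w w)"
proof -
  have "finite (supp_c w)" using assms finite_subset by blast
  then have "Bf (supp_c w) K w w = Bf S K w w" using Bf_eq assms by blast
  then show ?thesis unfolding knormsq_def Bf_def by simp
qed

definition phiS :: "complex set \<Rightarrow> (complex \<Rightarrow> complex) \<Rightarrow> (complex \<Rightarrow> complex) \<Rightarrow> complex" where
  "phiS S f w = (\<Sum>t\<in>S. w t * cnj (f t))"

lemma phiS_mono:
  assumes "finite S'" "S \<subseteq> S'" "supp_c w \<subseteq> S"
  shows "phiS S' f w = phiS S f w"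
  unfolding phiS_def by (rule sum.mono_neutral_right) (use assms supp_subD[OF assms(3)] in auto)

lemma supp_lin: "supp_c (\<lambda>t. w t + l * v t) \<subseteq> supp_c w \<union> supp_c v"
  unfolding supp_c_def by auto

lemma supp_diff: "supp_c (\<lambda>t. w t - v t) \<subseteq> supp_c w \<union> supp_c v"
  unfolding supp_c_def by auto

lemma Bf_quad_bound:
  assumes "psd_kernel D (\<lambda>s u. of_real C * K s u - f s * cnj (f u))" "finite F" "F \<subseteq> D"
  shows "(cmod (phiS F f w))\<^sup>2 \<le> C * Re (Bf F K w w)"
proof -
  have "cnonneg (\<Sum>t\<in>F. \<Sum>u\<in>F. w t * cnj (w u) * (of_real C * K u t - f u * cnj (f t)))"
    using psdD[OF assms] by blast
  also have "(\<Sum>t\<in>F. \<Sum>u\<in>F. w t * cnj (w u) * (of_real C * K u t - f u * cnj (f t)))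
      = of_real C * Bf F K w w - phiS F f w * cnj (phiS F f w)"
  proof -
    have "phiS F f w * cnj (phiS F f w) = (\<Sum>t\<in>F. \<Sum>u\<in>F. w t * cnj (f t) * (cnj (w u) * f u))"
      unfolding phiS_def by (simp add: sum_product)
    then show ?thesis unfolding Bf_def
      by (simp add: sum_subtractf sum_distrib_left algebra_simps)
  qed
  finally have "0 \<le> Re (of_real C * Bf F K w w - phiS F f w * cnj (phiS F f w))"
    unfolding cnonneg_def by blast
  moreover have "phiS F f w * cnj (phiS F f w) = of_real ((cmod (phiS F f w))\<^sup>2)"
    by (rule complex_norm_square[symmetric])
  ultimately show ?thesis by simp
qed

lemma rkhs_if:
  assumes K: "psd_kernel D K" and Cf: "psd_kernel D (\<lambda>s u. of_real C * K s u - f s * cnj (f u))"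
    and C: "C \<ge> 0"
  shows "in_rkhs D K f"
proof -
  define P where "P = {w. finite (supp_c w) \<and> supp_c w \<subseteq> D}"
  define J where "J w = knormsq K w - 2 * Re (phiS (supp_c w) f w)" for w
  have Jlow: "J w \<ge> - C" if "w \<in> P" for w
  proof -
    have fin: "finite (supp_c w)" "supp_c w \<subseteq> D" using that P_def by auto
    define N where "N = knormsq K w"
    define p where "p = cmod (phiS (supp_c w) f w)"
    have N: "N = Re (Bf (supp_c w) K w w)" using knormsq_Bf fin N_def by blast
    have N0: "N \<ge> 0" using Bf_nonneg[OF K fin] N by simp
    have pp: "p\<^sup>2 \<le> C * N" using Bf_quad_bound[OF Cf fin] N p_def by simp
    have "(2 * p)\<^sup>2 \<le> (N + C)\<^sup>2"
    proof -
      have "(2*p)\<^sup>2 = 4 * p\<^sup>2" by (simp add: power2_eq_square)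
      also have "\<dots> \<le> 4 * C * N" using pp by simp
      also have "\<dots> \<le> (N + C)\<^sup>2"
      proof -
        have "0 \<le> (N - C)\<^sup>2" by simp
        moreover have "4*C*N = 4*(N*C)" "2*N*C = 2*(N*C)" by simp_all
        ultimately show ?thesis unfolding power2_diff power2_sum by linarith
      qed
      finally show ?thesis .
    qed
    then have "2 * p \<le> N + C" by (rule power2_le_imp_le) (use N0 C in linarith)
    moreover have "Re (phiS (supp_c w) f w) \<le> p" unfolding p_def using complex_Re_le_cmod by blast
    ultimately show ?thesis unfolding J_def N_def by linarith
  qed
  define \<mu> where "\<mu> = Inf (J ` P)"
  have P0: "(\<lambda>_. 0) \<in> P" unfolding P_def supp_c_def by simp
  have bdd: "bdd_below (J ` P)" using Jlow by (intro bdd_belowI[of _ "-C"]) auto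
  have mu_le: "\<mu> \<le> J w" if "w \<in> P" for w
    unfolding \<mu>_def using bdd that by (intro cInf_lower) auto
  have "\<exists>w\<in>P. J w < \<mu> + 1 / real (Suc k)" for k
  proof -
    have "Inf (J ` P) < \<mu> + 1 / real (Suc k)" unfolding \<mu>_def by simp
    then show ?thesis using cInf_less_iff[of "J ` P"] P0 bdd by auto
  qed
  then obtain W where W: "\<And>k. W k \<in> P" "\<And>k. J (W k) < \<mu> + 1 / real (Suc k)" by metis
  have WP: "finite (supp_c (W k))" "supp_c (W k) \<subseteq> D" for k using W(1) P_def by auto
  
  have cauchy: "knormsq K (\<lambda>t. W i t - W j t) \<le> 2 * (J (W i) - \<mu>) + 2 * (J (W j) - \<mu>)" for i j
  proof -
    define S where "S = supp_c (W i) \<union> supp_c (W j)"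
    have S: "finite S" "S \<subseteq> D" using WP S_def by auto
    define d where "d = (\<lambda>t. W i t - W j t)"
    define m where "m = (\<lambda>t. W i t + (- 1/2) * d t)"
    have sd: "supp_c d \<subseteq> S" unfolding d_def S_def using supp_diff by blast
    have sm: "supp_c m \<subseteq> S" unfolding m_def using supp_lin[of "W i" "-1/2" d] sd S_def by blast
    have si: "supp_c (W i) \<subseteq> S" and sj: "supp_c (W j) \<subseteq> S" using S_def by auto
    have mP: "m \<in> P" unfolding P_def using sm S finite_subset by auto
    have Wj: "W j = (\<lambda>t. W i t + (- 1) * d t)" unfolding d_def by auto
    have qm: "Re (Bf S K m m) = Re (Bf S K (W i) (W i)) + 2 * Re (cnj (-1/2) * Bf S K (W i) d) + (cmod (-1/2 :: complex))\<^sup>2 * Re (Bf S K d d)"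
      unfolding m_def by (rule Bf_expand[OF K S])
    have qj: "Re (Bf S K (W j) (W j)) = Re (Bf S K (W i) (W i)) + 2 * Re (cnj (-1) * Bf S K (W i) d) + (cmod (-1 :: complex))\<^sup>2 * Re (Bf S K d d)"
      by (subst (1 2) Wj, rule Bf_expand[OF K S])
    have pm: "phiS S f m = phiS S f (W i) + (-1/2) * (phiS S f (W i) - phiS S f (W j))"
    proof -
      have "\<And>t. (W i t + (-1/2) * (W i t - W j t)) * cnj (f t) = W i t * cnj (f t) + (-1/2) * (W i t * cnj (f t) - W j t * cnj (f t))"
        by (simp add: algebra_simps)
      then show ?thesis unfolding m_def d_def phiS_def by (simp only: sum.distrib sum_subtractf sum_distrib_left right_diff_distrib)
    qed
    have Jm: "J m = Re (Bf S K m m) - 2 * Re (phiS S f m)"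
      unfolding J_def using knormsq_Bf[OF S(1) sm] phiS_mono[OF S(1) sm] by simp
    have Ji: "J (W i) = Re (Bf S K (W i) (W i)) - 2 * Re (phiS S f (W i))"
      unfolding J_def using knormsq_Bf[OF S(1) si] phiS_mono[OF S(1) si] by simp
    have Jj: "J (W j) = Re (Bf S K (W j) (W j)) - 2 * Re (phiS S f (W j))"
      unfolding J_def using knormsq_Bf[OF S(1) sj] phiS_mono[OF S(1) sj] by simp
    have kd: "knormsq K d = Re (Bf S K d d)" using knormsq_Bf[OF S(1) sd] .
    have "knormsq K d = 4 * ((J (W i) + J (W j)) / 2 - J m)"
      using qm qj pm Jm Ji Jj kd by (simp add: algebra_simps power2_eq_square)
    moreover have "\<mu> \<le> J m" using mu_le mP by blast
    ultimately have "knormsq K d \<le> 2 * (J (W i) - \<mu>) + 2 * (J (W j) - \<mu>)" by (simp add: field_simps)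
    then show ?thesis unfolding d_def .
  qed
  have cauchy': "\<forall>\<epsilon>>0. \<exists>N. \<forall>i\<ge>N. \<forall>j\<ge>N. knormsq K (\<lambda>t. W i t - W j t) < \<epsilon>"
  proof (intro allI impI)
    fix \<epsilon> :: real assume e: "\<epsilon> > 0"
    obtain N :: nat where N: "4 / \<epsilon> < real N" using reals_Archimedean2 by blast
    have Npos: "real N > 0" using N e by (smt (verit) divide_pos_pos)
    have b: "J (W i) - \<mu> < \<epsilon> / 4" if "i \<ge> N" for i
    proof -
      have "1 / real (Suc i) \<le> 1 / real N" using that Npos by (simp add: frac_le)
      also have "\<dots> < \<epsilon> / 4" using N e Npos by (simp add: field_simps)
      finally show ?thesis using W(2)[of i] by linarith
    qed
    show "\<exists>N. \<forall>i\<ge>N. \<forall>j\<ge>N. knormsq K (\<lambda>t. W i t - W j t) < \<epsilon>"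
    proof (intro exI[of _ N] allI impI)
      fix i j assume ij: "N \<le> i" "N \<le> j"
      have "J (W i) - \<mu> < \<epsilon> / 4" "J (W j) - \<mu> < \<epsilon> / 4" using b ij by auto
      moreover have "knormsq K (\<lambda>t. W i t - W j t) \<le> 2 * (J (W i) - \<mu>) + 2 * (J (W j) - \<mu>)" by (rule cauchy)
      ultimately show "knormsq K (\<lambda>t. W i t - W j t) < \<epsilon>" by (simp add: algebra_simps)
    qed
  qed
  
  have conv: "(\<lambda>k. kcomb K (W k) s) \<longlonglongrightarrow> f s" if s: "s \<in> D" for s
  proof -
    define \<delta> where "\<delta> = (\<lambda>t. if t = s then (1::complex) else 0)"
    define q\<delta> where "q\<delta> = Re (K s s)"
    have sdel: "supp_c \<delta> \<subseteq> {s}" unfolding \<delta>_def supp_c_def by auto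
    have est: "(cmod (kcomb K (W k) s - f s))\<^sup>2 \<le> (J (W k) - \<mu>) * (q\<delta> + 1)" for k
    proof -
      define w where "w = W k"
      define S where "S = supp_c w \<union> {s}"
      have S: "finite S" "S \<subseteq> D" using WP s S_def w_def by auto
      have sw: "supp_c w \<subseteq> S" and sd: "supp_c \<delta> \<subseteq> S" using S_def sdel by auto
      have qd: "Re (Bf S K \<delta> \<delta>) = q\<delta>"
      proof -
        have "Bf S K \<delta> \<delta> = Bf {s} K \<delta> \<delta>" by (rule Bf_mono) (use S sdel S_def in auto)
        then show ?thesis unfolding q\<delta>_def Bf_def \<delta>_def by simp
      qed
      have qd0: "q\<delta> \<ge> 0" using Bf_nonneg[OF K S, of \<delta>] qd by simp
      have kc: "kcomb K w s = Bf S K w \<delta>"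
      proof -
        have "Bf S K w \<delta> = (\<Sum>t\<in>supp_c w. \<Sum>u\<in>{s}. w t * cnj (\<delta> u) * K u t)"
          unfolding S_def by (rule Bf_split) (use WP w_def sdel in auto)
        then show ?thesis unfolding kcomb_def \<delta>_def by simp
      qed
      have pd: "phiS S f \<delta> = cnj (f s)"
      proof -
        have "phiS S f \<delta> = phiS {s} f \<delta>" by (rule phiS_mono) (use S sdel S_def in auto)
        then show ?thesis unfolding phiS_def \<delta>_def by simp
      qed
      define d where "d = Bf S K w \<delta> - f s"
      define \<epsilon> where "\<epsilon> = 1 / (q\<delta> + 1)"
      have e0: "\<epsilon> > 0" using qd0 \<epsilon>_def by simp
      define l where "l = - of_real \<epsilon> * d"
      define v where "v = (\<lambda>t. w t + l * \<delta> t)"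
      have sv: "supp_c v \<subseteq> S" unfolding v_def using supp_lin[of w l \<delta>] sw sd by blast
      have vP: "v \<in> P" unfolding P_def using sv S finite_subset by auto
      have Jv: "J v = Re (Bf S K v v) - 2 * Re (phiS S f v)"
        unfolding J_def using knormsq_Bf[OF S(1) sv] phiS_mono[OF S(1) sv] by simp
      have Jw: "J w = Re (Bf S K w w) - 2 * Re (phiS S f w)"
        unfolding J_def using knormsq_Bf[OF S(1) sw] phiS_mono[OF S(1) sw] by simp
      have ev: "Re (Bf S K v v) = Re (Bf S K w w) + 2 * Re (cnj l * Bf S K w \<delta>) + (cmod l)\<^sup>2 * q\<delta>"
        unfolding v_def qd[symmetric] by (rule Bf_expand[OF K S])
      have pv: "phiS S f v = phiS S f w + l * cnj (f s)"
        unfolding v_def pd[symmetric] phiS_def by (simp add: sum.distrib sum_distrib_left algebra_simps)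
      have re1: "Re (l * cnj (f s)) = Re (cnj l * f s)"
        by simp
      have "J v = J w + 2 * Re (cnj l * d) + (cmod l)\<^sup>2 * q\<delta>"
        using Jv Jw ev pv re1 unfolding d_def by (simp add: algebra_simps)
      also have "cnj l * d = - of_real (\<epsilon> * (cmod d)\<^sup>2)"
      proof -
        have bb: "cnj d * d = of_real ((cmod d)^2)" using complex_norm_square[of d] by (simp add: mult.commute)
        have "cnj l * d = - of_real \<epsilon> * (cnj d * d)" unfolding l_def by simp
        then show ?thesis unfolding bb by simp
      qed
      also have "(cmod l)\<^sup>2 = \<epsilon>\<^sup>2 * (cmod d)\<^sup>2"
        unfolding l_def using e0 by (simp add: norm_mult power_mult_distrib)
      finally have "J v = J w - 2 * \<epsilon> * (cmod d)\<^sup>2 + \<epsilon>\<^sup>2 * (cmod d)\<^sup>2 * q\<delta>" by simp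
      moreover have "\<mu> \<le> J v" using mu_le vP by blast
      moreover have "\<epsilon>\<^sup>2 * q\<delta> \<le> \<epsilon>"
      proof -
        have "\<epsilon> * q\<delta> \<le> 1" unfolding \<epsilon>_def using qd0 by (simp add: field_simps)
        then have "\<epsilon> * (\<epsilon> * q\<delta>) \<le> \<epsilon> * 1" using e0 by (intro mult_left_mono) auto
        then show ?thesis by (simp add: power2_eq_square algebra_simps)
      qed
      ultimately have "\<epsilon> * (cmod d)\<^sup>2 \<le> J w - \<mu>"
        using mult_right_mono[of "\<epsilon>\<^sup>2 * q\<delta>" \<epsilon> "(cmod d)\<^sup>2"] by (simp add: algebra_simps)
      then have "(cmod d)\<^sup>2 \<le> (J w - \<mu>) * (q\<delta> + 1)"
        unfolding \<epsilon>_def using qd0 by (simp add: field_simps)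
      then have "(cmod (Bf S K w \<delta> - f s))\<^sup>2 \<le> (J w - \<mu>) * (q\<delta> + 1)" unfolding d_def .
      then show ?thesis unfolding kc[symmetric] unfolding w_def .
    qed
    have qd0: "q\<delta> \<ge> 0"
    proof -
      have "Bf {s} K \<delta> \<delta> = K s s" unfolding Bf_def \<delta>_def by simp
      then show ?thesis using Bf_nonneg[OF K, of "{s}" \<delta>] s q\<delta>_def by simp
    qed
    show ?thesis
    proof (rule LIMSEQ_I)
      fix r :: real assume r: "r > 0"
      obtain N :: nat where N: "(q\<delta> + 1) / r\<^sup>2 < real N" using reals_Archimedean2 by blast
      have Npos: "real N > 0" using N r qd0 by (smt (verit) divide_pos_pos zero_less_power)
      show "\<exists>N. \<forall>k\<ge>N. norm (kcomb K (W k) s - f s) < r"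
      proof (intro exI[of _ N] allI impI)
        fix k assume k: "k \<ge> N"
        have "(cmod (kcomb K (W k) s - f s))\<^sup>2 \<le> (J (W k) - \<mu>) * (q\<delta> + 1)" by (rule est)
        also have "\<dots> \<le> (1 / real (Suc k)) * (q\<delta> + 1)"
          using W(2)[of k] qd0 by (intro mult_right_mono) auto
        also have "\<dots> \<le> (1 / real N) * (q\<delta> + 1)"
          using k Npos qd0 by (intro mult_right_mono) (auto simp: frac_le)
        also have "\<dots> < r\<^sup>2" using N Npos r by (simp add: field_simps)
        finally have "(cmod (kcomb K (W k) s - f s))\<^sup>2 < r\<^sup>2" .
        then show "norm (kcomb K (W k) s - f s) < r" using r by (simp add: power_less_imp_less_base)
      qed
    qed
  qed
  show ?thesis unfolding in_rkhs_def
    using WP cauchy' conv by blast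
qed




lemma rkhs_only_if:
  assumes K: "psd_kernel D K" and H: "in_rkhs D K f"
  shows "\<exists>C\<ge>0. psd_kernel D (\<lambda>s u. of_real C * K s u - f s * cnj (f u))"
proof -
  obtain W where WP: "\<And>k. finite (supp_c (W k)) \<and> supp_c (W k) \<subseteq> D"
    and cau: "\<forall>\<epsilon>>0. \<exists>N. \<forall>i\<ge>N. \<forall>j\<ge>N. knormsq K (\<lambda>t. W i t - W j t) < \<epsilon>"
    and conv: "\<forall>s\<in>D. (\<lambda>k. kcomb K (W k) s) \<longlonglongrightarrow> f s"
    using H unfolding in_rkhs_def by blast
  have kn0: "knormsq K (W k) \<ge> 0" for k
    using knormsq_Bf[of "supp_c (W k)" "W k" K] WP[of k] Bf_nonneg[OF K, of "supp_c (W k)" "W k"] by auto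
  obtain N where N: "\<And>i j. i \<ge> N \<Longrightarrow> j \<ge> N \<Longrightarrow> knormsq K (\<lambda>t. W i t - W j t) < 1"
    using cau by (meson zero_less_one)
  define B where "B = 2 * knormsq K (W N) + 2 + (\<Sum>k<N. knormsq K (W k))"
  have Bb: "knormsq K (W k) \<le> B" for k
  proof (cases "k < N")
    case True
    have "knormsq K (W k) \<le> (\<Sum>k<N. knormsq K (W k))"
      using True kn0 by (intro member_le_sum) auto
    then show ?thesis unfolding B_def using kn0[of N] by linarith
  next
    case False
    define S where "S = supp_c (W k) \<union> supp_c (W N)"
    have S: "finite S" "S \<subseteq> D" using WP S_def by auto
    define d where "d = (\<lambda>t. W k t - W N t)"
    have sd: "supp_c d \<subseteq> S" unfolding d_def S_def using supp_diff by blast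
    have sk: "supp_c (W k) \<subseteq> S" and sN: "supp_c (W N) \<subseteq> S" using S_def by auto
    have e1: "Re (Bf S K (\<lambda>t. W N t + 1 * d t) (\<lambda>t. W N t + 1 * d t)) = Re (Bf S K (W N) (W N)) + 2 * Re (cnj 1 * Bf S K (W N) d) + (cmod (1::complex))\<^sup>2 * Re (Bf S K d d)"
      by (rule Bf_expand[OF K S])
    have e2: "Re (Bf S K (\<lambda>t. W N t + (-1) * d t) (\<lambda>t. W N t + (-1) * d t)) = Re (Bf S K (W N) (W N)) + 2 * Re (cnj (-1) * Bf S K (W N) d) + (cmod (-1::complex))\<^sup>2 * Re (Bf S K d d)"
      by (rule Bf_expand[OF K S])
    have "(\<lambda>t. W N t + 1 * d t) = W k" unfolding d_def by auto
    with e1 have e1': "Re (Bf S K (W k) (W k)) = Re (Bf S K (W N) (W N)) + 2 * Re (Bf S K (W N) d) + Re (Bf S K d d)" by simp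
    have "0 \<le> Re (Bf S K (\<lambda>t. W N t + (-1) * d t) (\<lambda>t. W N t + (-1) * d t))" using Bf_nonneg[OF K S] .
    with e2 have "0 \<le> Re (Bf S K (W N) (W N)) - 2 * Re (Bf S K (W N) d) + Re (Bf S K d d)" by simp
    moreover have "knormsq K d < 1" using N False unfolding d_def by auto
    moreover have "knormsq K d = Re (Bf S K d d)" using knormsq_Bf[OF S(1) sd] .
    moreover have "knormsq K (W k) = Re (Bf S K (W k) (W k))" using knormsq_Bf[OF S(1) sk] .
    moreover have "knormsq K (W N) = Re (Bf S K (W N) (W N))" using knormsq_Bf[OF S(1) sN] .
    moreover have "0 \<le> (\<Sum>k<N. knormsq K (W k))" using kn0 by (intro sum_nonneg) auto
    ultimately show ?thesis using e1' unfolding B_def by linarith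
  qed
  have B0: "B \<ge> 0" using Bb[of 0] kn0[of 0] by linarith
  have "psd_kernel D (\<lambda>s u. of_real B * K s u - f s * cnj (f u))"
    unfolding psd_kernel_def
  proof (intro allI impI)
    fix F :: "complex set" and c :: "complex \<Rightarrow> complex" assume F: "finite F \<and> F \<subseteq> D"
    define c' where "c' = (\<lambda>t. if t \<in> F then c t else 0)"
    have sc: "supp_c c' \<subseteq> F" unfolding c'_def supp_c_def by auto
    have BF: "Bf F K c c = Bf F K c' c'" unfolding Bf_def c'_def using F by (auto intro!: sum.cong)
    define \<psi> where "\<psi> = (\<Sum>u\<in>F. cnj (c u) * f u)"
    define \<psi>k where "\<psi>k k = (\<Sum>u\<in>F. cnj (c u) * kcomb K (W k) u)" for k
    have lim: "\<psi>k \<longlonglongrightarrow> \<psi>" unfolding \<psi>k_def \<psi>_def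
      using conv F by (intro tendsto_sum tendsto_mult tendsto_const) auto
    have bnd: "(cmod (\<psi>k k))\<^sup>2 \<le> B * Re (Bf F K c c)" for k
    proof -
      define S where "S = supp_c (W k) \<union> F"
      have S: "finite S" "S \<subseteq> D" using WP F S_def by auto
      have "Bf S K (W k) c' = (\<Sum>t\<in>supp_c (W k). \<Sum>u\<in>F. W k t * cnj (c' u) * K u t)"
        unfolding S_def by (rule Bf_split) (use WP F sc in auto)
      also have "\<dots> = \<psi>k k"
        unfolding \<psi>k_def kcomb_def c'_def
        by (subst sum.swap) (auto simp: sum_distrib_left algebra_simps intro!: sum.cong)
      finally have e: "Bf S K (W k) c' = \<psi>k k" .
      have "(cmod (\<psi>k k))\<^sup>2 \<le> Re (Bf S K (W k) (W k)) * Re (Bf S K c' c')"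
        unfolding e[symmetric] by (rule Bf_CS[OF K S])
      also have "Re (Bf S K (W k) (W k)) = knormsq K (W k)"
        using knormsq_Bf[OF S(1)] S_def by auto
      also have "Bf S K c' c' = Bf F K c c"
        unfolding BF using Bf_mono[of S F c' c' K] S sc S_def by auto
      also have "knormsq K (W k) * Re (Bf F K c c) \<le> B * Re (Bf F K c c)"
        using Bb Bf_nonneg[OF K, of F c] F by (intro mult_right_mono) auto
      finally show ?thesis .
    qed
    have lim2: "(\<lambda>k. (cmod (\<psi>k k))\<^sup>2) \<longlonglongrightarrow> (cmod \<psi>)\<^sup>2"
      by (intro tendsto_intros lim)
    have psi_b: "(cmod \<psi>)\<^sup>2 \<le> B * Re (Bf F K c c)"
      by (rule LIMSEQ_le_const2[OF lim2]) (use bnd in auto)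
    have eq: "(\<Sum>t\<in>F. \<Sum>u\<in>F. c t * cnj (c u) * (of_real B * K u t - f u * cnj (f t)))
        = of_real B * Bf F K c c - cnj \<psi> * \<psi>"
    proof -
      have "cnj \<psi> * \<psi> = (\<Sum>t\<in>F. \<Sum>u\<in>F. c t * cnj (f t) * (cnj (c u) * f u))"
        unfolding \<psi>_def by (simp add: sum_product)
      then show ?thesis unfolding Bf_def
        by (simp add: sum_subtractf sum_distrib_left algebra_simps)
    qed
    have r: "Bf F K c c = of_real (Re (Bf F K c c))" using Bf_real[OF K] F by blast
    have r2: "cnj \<psi> * \<psi> = of_real ((cmod \<psi>)\<^sup>2)" using complex_norm_square[of \<psi>] by (simp add: mult.commute)
    show "cnonneg (\<Sum>t\<in>F. \<Sum>u\<in>F. c t * cnj (c u) * (of_real B * K u t - f u * cnj (f t)))"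
      unfolding eq cnonneg_def using psi_b by (subst r, subst r2, simp)
  qed
  then show ?thesis using B0 by blast
qed

lemma rkhs_iff:
  assumes K: "psd_kernel D K"
  shows "in_rkhs D K f \<longleftrightarrow> (\<exists>C\<ge>0. psd_kernel D (\<lambda>s u. of_real C * K s u - f s * cnj (f u)))"
  using rkhs_if[OF K] rkhs_only_if[OF K] by blast



lemma norm_pw: "n \<ge> 1 \<Longrightarrow> norm (of_nat n powr (- s) :: complex) = real n powr (- Re s)"
  using norm_powr_real_powr[of "of_nat n" "-s"] by simp

lemma cnj_pw: "cnj (of_nat n powr (- s) :: complex) = of_nat n powr (- cnj s)"
  by (subst cnj_powr) auto

lemma cnonneg_closed: "closed {z. cnonneg z}"
proof -
  have "{z. cnonneg z} = {z. Im z = 0} \<inter> {z. Re z \<ge> 0}" unfolding cnonneg_def by auto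
  moreover have "closed {z::complex. Im z = 0}" by (intro closed_Collect_eq continuous_intros)
  moreover have "closed {z::complex. Re z \<ge> 0}" by (intro closed_Collect_le continuous_intros)
  ultimately show ?thesis by auto
qed

lemma cnonneg_lim:
  assumes "(X \<longlongrightarrow> L) sequentially" "\<And>n. cnonneg (X n)"
  shows "cnonneg L"
  using Lim_in_closed_set[OF cnonneg_closed, of X sequentially L] assms by auto

lemma suminf1_lim:
  assumes "summable1 g"
  shows "(\<lambda>N. \<Sum>n\<in>{1..N}. g n) \<longlonglongrightarrow> suminf1 g"
proof -
  have "(\<lambda>N. \<Sum>n\<le>N. (if n = 0 then 0 else g n)) \<longlonglongrightarrow> suminf1 g"
    using summable_LIMSEQ'[OF assms[unfolded summable1_def]] unfolding suminf1_def .
  moreover have "(\<Sum>n\<le>N. (if n = 0 then 0 else g n)) = (\<Sum>n\<in>{1..N}. g n)" for N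
  proof -
    have "(\<Sum>n\<le>N. (if n = 0 then 0 else g n)) = (\<Sum>n\<in>{1..N}. (if n = 0 then 0 else g n))"
      by (rule sum.mono_neutral_right) auto
    also have "\<dots> = (\<Sum>n\<in>{1..N}. g n)" by (rule sum.cong) auto
    finally show ?thesis .
  qed
  ultimately show ?thesis by simp
qed

lemma prodF_nontriv: "(sequentially \<times>\<^sub>F sequentially :: (nat \<times> nat) filter) \<noteq> bot"
  by (simp add: prod_filter_eq_bot)

lemma dkernel_lim:
  assumes "dirichlet_series_kernel \<rho> a" "s \<in> halfplane \<rho>" "u \<in> halfplane \<rho>"
  shows "(rect_sum (dk_term a s u) \<longlongrightarrow> dkernel a s u) (sequentially \<times>\<^sub>F sequentially)"
proof -
  have "cnj u \<in> halfplane \<rho>" using assms(3) unfolding halfplane_def by simp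
  then have "regularly_convergent (dk_term a s (cnj (cnj u)))"
    using assms unfolding dirichlet_series_kernel_def by blast
  then obtain L where L: "(rect_sum (dk_term a s u) \<longlongrightarrow> L) (sequentially \<times>\<^sub>F sequentially)"
    unfolding regularly_convergent_def by auto
  then have "dkernel a s u = L" unfolding dkernel_def
    by (intro tendsto_Lim) (auto simp: prodF_nontriv)
  with L show ?thesis by simp
qed

definition xm :: "real \<Rightarrow> (nat \<Rightarrow> nat \<Rightarrow> complex) \<Rightarrow> (nat \<Rightarrow> complex) \<Rightarrow> nat \<Rightarrow> nat \<Rightarrow> complex" where
  "xm C a fh m n = complex_of_real C * a m n - fh m * cnj (fh n)"

definition xt :: "(nat \<Rightarrow> nat \<Rightarrow> complex) \<Rightarrow> complex \<Rightarrow> complex \<Rightarrow> nat \<Rightarrow> nat \<Rightarrow> complex" where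
  "xt X s u m n = X m n * of_nat m powr (- s) * of_nat n powr (- cnj u)"

lemma rect_sum_xt:
  "rect_sum (xt (xm C a fh) s u) (M, N) =
     of_real C * rect_sum (dk_term a s u) (M, N) - (\<Sum>m\<in>{1..M}. dir_term fh s m) * cnj (\<Sum>n\<in>{1..N}. dir_term fh u n)"
proof -
  have "(\<Sum>m\<in>{1..M}. dir_term fh s m) * cnj (\<Sum>n\<in>{1..N}. dir_term fh u n)
      = (\<Sum>m\<in>{1..M}. \<Sum>n\<in>{1..N}. dir_term fh s m * cnj (dir_term fh u n))"
    by (simp add: sum_product cnj_sum)
  moreover have "xt (xm C a fh) s u m n = of_real C * dk_term a s u m n - dir_term fh s m * cnj (dir_term fh u n)" for m n
    unfolding xt_def xm_def dk_term_def dir_term_def by (simp add: cnj_pw algebra_simps)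
  ultimately show ?thesis unfolding rect_sum_def
    by (simp add: sum_subtractf sum_distrib_left)
qed

lemma xt_lim:
  assumes "dirichlet_series_kernel \<rho> a" "s \<in> halfplane \<rho>" "u \<in> halfplane \<rho>"
    and "summable1 (dir_term fh s)" "summable1 (dir_term fh u)"
  shows "(rect_sum (xt (xm C a fh) s u) \<longlongrightarrow>
           of_real C * dkernel a s u - suminf1 (dir_term fh s) * cnj (suminf1 (dir_term fh u)))
         (sequentially \<times>\<^sub>F sequentially)"
proof -
  have l1: "((\<lambda>p. \<Sum>m\<in>{1..fst p}. dir_term fh s m) \<longlongrightarrow> suminf1 (dir_term fh s)) (sequentially \<times>\<^sub>F sequentially)"
    by (rule filterlim_compose[OF suminf1_lim[OF assms(4)] filterlim_fst])
  have l2: "((\<lambda>p. \<Sum>n\<in>{1..snd p}. dir_term fh u n) \<longlongrightarrow> suminf1 (dir_term fh u)) (sequentially \<times>\<^sub>F sequentially)"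
    by (rule filterlim_compose[OF suminf1_lim[OF assms(5)] filterlim_snd])
  have "((\<lambda>p. of_real C * rect_sum (dk_term a s u) p - (\<Sum>m\<in>{1..fst p}. dir_term fh s m) * cnj (\<Sum>n\<in>{1..snd p}. dir_term fh u n))
        \<longlongrightarrow> of_real C * dkernel a s u - suminf1 (dir_term fh s) * cnj (suminf1 (dir_term fh u))) (sequentially \<times>\<^sub>F sequentially)"
    by (intro tendsto_intros dkernel_lim[OF assms(1-3)] l1 l2)
  moreover have "rect_sum (xt (xm C a fh) s u) = (\<lambda>p. of_real C * rect_sum (dk_term a s u) p - (\<Sum>m\<in>{1..fst p}. dir_term fh s m) * cnj (\<Sum>n\<in>{1..snd p}. dir_term fh u n))"
  proof (rule ext)
    fix p :: "nat \<times> nat"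
    show "rect_sum (xt (xm C a fh) s u) p = of_real C * rect_sum (dk_term a s u) p - (\<Sum>m\<in>{1..fst p}. dir_term fh s m) * cnj (\<Sum>n\<in>{1..snd p}. dir_term fh u n)"
      by (cases p) (simp only: rect_sum_xt fst_conv snd_conv)
  qed
  ultimately show ?thesis by (simp only:)
qed

lemma diag_lim:
  assumes "(g \<longlongrightarrow> L) (sequentially \<times>\<^sub>F sequentially)"
  shows "(\<lambda>N. g (N, N)) \<longlonglongrightarrow> L"
proof -
  have "filterlim (\<lambda>N::nat. (N, N)) (sequentially \<times>\<^sub>F sequentially) sequentially"
    by (intro filterlim_Pair filterlim_ident)
  from filterlim_compose[OF assms this] show ?thesis by simp
qed

lemma rect_diag: "rect_sum b (N, N) = (\<Sum>m\<in>{1..N}. \<Sum>n\<in>{1..N}. b m n)"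
  unfolding rect_sum_def by simp

lemma sum4_swap:
  "(\<Sum>m\<in>A. \<Sum>n\<in>B. \<Sum>u\<in>C. \<Sum>t\<in>D. f m n u t) = (\<Sum>t\<in>D. \<Sum>u\<in>C. \<Sum>m\<in>A. \<Sum>n\<in>B. f m n u t)"
proof -
  have "(\<Sum>m\<in>A. \<Sum>n\<in>B. \<Sum>u\<in>C. \<Sum>t\<in>D. f m n u t) = (\<Sum>m\<in>A. \<Sum>u\<in>C. \<Sum>n\<in>B. \<Sum>t\<in>D. f m n u t)"
    by (rule sum.cong[OF refl], rule sum.swap)
  also have "\<dots> = (\<Sum>m\<in>A. \<Sum>u\<in>C. \<Sum>t\<in>D. \<Sum>n\<in>B. f m n u t)"
    by (rule sum.cong[OF refl], rule sum.cong[OF refl], rule sum.swap)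
  also have "\<dots> = (\<Sum>u\<in>C. \<Sum>m\<in>A. \<Sum>t\<in>D. \<Sum>n\<in>B. f m n u t)"
    by (rule sum.swap)
  also have "\<dots> = (\<Sum>u\<in>C. \<Sum>t\<in>D. \<Sum>m\<in>A. \<Sum>n\<in>B. f m n u t)"
    by (rule sum.cong[OF refl], rule sum.swap)
  also have "\<dots> = (\<Sum>t\<in>D. \<Sum>u\<in>C. \<Sum>m\<in>A. \<Sum>n\<in>B. f m n u t)"
    by (rule sum.swap)
  finally show ?thesis .
qed

lemma fin_ident:
  fixes T :: "complex set" and A :: "nat set" and c :: "complex \<Rightarrow> complex" and X :: "nat \<Rightarrow> nat \<Rightarrow> complex"
  defines "V \<equiv> (\<lambda>n. \<Sum>t\<in>T. c t * of_nat n powr (- cnj t))"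
  shows "(\<Sum>t\<in>T. \<Sum>u\<in>T. c t * cnj (c u) * (\<Sum>m\<in>A. \<Sum>n\<in>A. xt X u t m n))
       = (\<Sum>m\<in>A. \<Sum>n\<in>A. cnj (V m) * X m n * V n)"
proof -
  have cV: "cnj (V m) = (\<Sum>u\<in>T. cnj (c u) * of_nat m powr (- u))" for m
    unfolding V_def by (simp add: cnj_sum cnj_pw)
  have e1: "cnj (V m) * X m n * V n = (\<Sum>u\<in>T. \<Sum>t\<in>T. c t * cnj (c u) * xt X u t m n)" for m n
  proof -
    have "cnj (V m) * X m n * V n = (\<Sum>u\<in>T. cnj (c u) * of_nat m powr (- u)) * (\<Sum>t\<in>T. X m n * (c t * of_nat n powr (- cnj t)))"
      unfolding cV V_def by (simp add: sum_distrib_left mult.assoc mult.left_commute cnj_pw cnj_sum)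
    also have "\<dots> = (\<Sum>u\<in>T. \<Sum>t\<in>T. (cnj (c u) * of_nat m powr (- u)) * (X m n * (c t * of_nat n powr (- cnj t))))"
      by (rule sum_product)
    also have "\<dots> = (\<Sum>u\<in>T. \<Sum>t\<in>T. c t * cnj (c u) * xt X u t m n)"
      unfolding xt_def by (intro sum.cong refl) (simp add: mult_ac)
    finally show ?thesis .
  qed
  have "(\<Sum>m\<in>A. \<Sum>n\<in>A. cnj (V m) * X m n * V n)
      = (\<Sum>m\<in>A. \<Sum>n\<in>A. \<Sum>u\<in>T. \<Sum>t\<in>T. c t * cnj (c u) * xt X u t m n)"
    unfolding e1 ..
  also have "\<dots> = (\<Sum>t\<in>T. \<Sum>u\<in>T. \<Sum>m\<in>A. \<Sum>n\<in>A. c t * cnj (c u) * xt X u t m n)"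
    by (rule sum4_swap)
  also have "\<dots> = (\<Sum>t\<in>T. \<Sum>u\<in>T. c t * cnj (c u) * (\<Sum>m\<in>A. \<Sum>n\<in>A. xt X u t m n))"
    by (simp only: sum_distrib_left)
  finally show ?thesis by simp
qed

lemma B1:
  assumes ker: "dirichlet_series_kernel \<rho> a" and sf: "\<forall>s\<in>halfplane \<rho>. summable1 (dir_term fh s)"
    and fp: "formally_psd (xm C a fh)"
  shows "psd_kernel (halfplane \<rho>) (\<lambda>s u. of_real C * dkernel a s u - suminf1 (dir_term fh s) * cnj (suminf1 (dir_term fh u)))"
  unfolding psd_kernel_def
proof (intro allI impI)
  fix F :: "complex set" and c :: "complex \<Rightarrow> complex"
  assume F: "finite F \<and> F \<subseteq> halfplane \<rho>"
  define f where "f s = suminf1 (dir_term fh s)" for s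
  have lim_ut: "(\<lambda>N. \<Sum>m\<in>{1..N}. \<Sum>n\<in>{1..N}. xt (xm C a fh) u t m n) \<longlonglongrightarrow> of_real C * dkernel a u t - f u * cnj (f t)"
    if "u \<in> F" "t \<in> F" for u t
  proof -
    have "u \<in> halfplane \<rho>" "t \<in> halfplane \<rho>" using that F by auto
    from diag_lim[OF xt_lim[OF ker this sf[rule_format, OF this(1)] sf[rule_format, OF this(2)]]]
    show ?thesis unfolding rect_diag f_def .
  qed
  have lim: "(\<lambda>N. \<Sum>t\<in>F. \<Sum>u\<in>F. c t * cnj (c u) * (\<Sum>m\<in>{1..N}. \<Sum>n\<in>{1..N}. xt (xm C a fh) u t m n))
      \<longlonglongrightarrow> (\<Sum>t\<in>F. \<Sum>u\<in>F. c t * cnj (c u) * (of_real C * dkernel a u t - f u * cnj (f t)))"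
    by (intro tendsto_sum tendsto_mult tendsto_const lim_ut)
  have nn: "cnonneg (\<Sum>t\<in>F. \<Sum>u\<in>F. c t * cnj (c u) * (\<Sum>m\<in>{1..N}. \<Sum>n\<in>{1..N}. xt (xm C a fh) u t m n))" for N
  proof -
    define V where "V = (\<lambda>n. \<Sum>t\<in>F. c t * of_nat n powr (- cnj t))"
    have "cnonneg (\<Sum>m\<in>{1..N}. \<Sum>n\<in>{1..N}. cnj (V m) * xm C a fh m n * V n)"
      using fp unfolding formally_psd_def by auto
    then show ?thesis unfolding V_def fin_ident .
  qed
  show "cnonneg (\<Sum>t\<in>F. \<Sum>u\<in>F. c t * cnj (c u) * (of_real C * dkernel a u t - suminf1 (dir_term fh u) * cnj (suminf1 (dir_term fh t))))"
    using cnonneg_lim[OF lim nn] unfolding f_def .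
qed



lemma summable1_bounded:
  assumes "summable1 g"
  shows "\<exists>B\<ge>0. \<forall>n\<ge>1. norm (g n) \<le> B"
proof -
  have "(\<lambda>n. if n = 0 then 0 else g n) \<longlonglongrightarrow> 0"
    using summable_LIMSEQ_zero assms unfolding summable1_def by blast
  then have "convergent (\<lambda>n. if n = 0 then 0 else g n)" by (rule convergentI)
  then have "Bseq (\<lambda>n. if n = 0 then 0 else g n)" by (rule convergent_imp_Bseq)
  then obtain K where K: "K > 0" "\<And>n. norm (if n = 0 then 0 else g n) \<le> K" by (auto elim!: BseqE)
  have "norm (g n) \<le> K" if "n \<ge> 1" for n using K(2)[of n] that by (simp split: if_splits)
  then show ?thesis using K(1) by (intro exI[of _ K]) auto
qed

lemma rect_sum_term:
  assumes "m \<ge> 1" "n \<ge> 1"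
  shows "b m n = rect_sum b (m, n) - rect_sum b (m - 1, n) - rect_sum b (m, n - 1) + rect_sum b (m - 1, n - 1)"
proof -
  have A: "{1..k} = insert k {1..k - 1}" if "k \<ge> 1" for k :: nat using that by auto
  have B: "k \<notin> {1..k - 1}" if "k \<ge> 1" for k :: nat using that by auto
  have r1: "rect_sum b (m, N) - rect_sum b (m - 1, N) = (\<Sum>j\<in>{1..N}. b m j)" for N
  proof -
    have "rect_sum b (m, N) = (\<Sum>i\<in>insert m {1..m - 1}. \<Sum>j\<in>{1..N}. b i j)"
      unfolding rect_sum_def by (simp only: prod.case A[OF assms(1)])
    also have "\<dots> = (\<Sum>j\<in>{1..N}. b m j) + (\<Sum>i\<in>{1..m - 1}. \<Sum>j\<in>{1..N}. b i j)"
      by (rule sum.insert) (use B[OF assms(1)] in auto)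
    also have "(\<Sum>i\<in>{1..m - 1}. \<Sum>j\<in>{1..N}. b i j) = rect_sum b (m - 1, N)"
      unfolding rect_sum_def by simp
    finally show ?thesis by simp
  qed
  have "rect_sum b (m, n) - rect_sum b (m - 1, n) - (rect_sum b (m, n - 1) - rect_sum b (m - 1, n - 1))
     = (\<Sum>j\<in>{1..n}. b m j) - (\<Sum>j\<in>{1..n - 1}. b m j)" by (simp only: r1)
  also have "\<dots> = b m n"
  proof -
    have "(\<Sum>j\<in>{1..n}. b m j) = (\<Sum>j\<in>insert n {1..n - 1}. b m j)" by (simp only: A[OF assms(2)])
    also have "\<dots> = b m n + (\<Sum>j\<in>{1..n - 1}. b m j)"
      by (rule sum.insert) (use B[OF assms(2)] in auto)
    finally show ?thesis by simp
  qed
  finally show ?thesis by (simp add: algebra_simps)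
qed

lemma norm4: "norm (a - b - c + d) \<le> norm a + norm b + norm c + norm (d::'a::real_normed_vector)"
proof -
  have 1: "norm (a - b - c + d) \<le> norm (a - b - c) + norm d" by (rule norm_triangle_ineq)
  have 2: "norm (a - b - c) \<le> norm (a - b) + norm c" by (rule norm_triangle_ineq4)
  have 3: "norm (a - b) \<le> norm a + norm b" by (rule norm_triangle_ineq4)
  from 1 2 3 show ?thesis by linarith
qed

lemma rc_bounded:
  assumes "regularly_convergent b"
  shows "\<exists>B. \<forall>m\<ge>1. \<forall>n\<ge>1. norm (b m n) \<le> B"
proof -
  obtain L where L: "(rect_sum b \<longlongrightarrow> L) (sequentially \<times>\<^sub>F sequentially)"
    and rows: "\<forall>m\<ge>1. summable1 (\<lambda>n. b m n)" and cols: "\<forall>n\<ge>1. summable1 (\<lambda>m. b m n)"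
    using assms unfolding regularly_convergent_def by blast
  have "eventually (\<lambda>p. dist (rect_sum b p) L < 1) (sequentially \<times>\<^sub>F sequentially)"
    using L by (rule tendstoD) simp
  then obtain N0 where N0: "\<And>m n. m \<ge> N0 \<Longrightarrow> n \<ge> N0 \<Longrightarrow> dist (rect_sum b (n, m)) L < 1"
    unfolding eventually_prod_sequentially by blast
  have "\<forall>m. \<exists>B. m \<ge> 1 \<longrightarrow> B \<ge> 0 \<and> (\<forall>n\<ge>1. norm (b m n) \<le> B)"
    using rows summable1_bounded by blast
  from choice[OF this] obtain Br where Br': "\<forall>m. m \<ge> 1 \<longrightarrow> Br m \<ge> 0 \<and> (\<forall>n\<ge>1. norm (b m n) \<le> Br m)" by blast
  have Br: "Br m \<ge> 0 \<and> (\<forall>n\<ge>1. norm (b m n) \<le> Br m)" if "m \<ge> 1" for m using Br' that by blast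
  have "\<forall>n. \<exists>B. n \<ge> 1 \<longrightarrow> B \<ge> 0 \<and> (\<forall>m\<ge>1. norm (b m n) \<le> B)"
    using cols summable1_bounded by blast
  from choice[OF this] obtain Bc where Bc': "\<forall>n. n \<ge> 1 \<longrightarrow> Bc n \<ge> 0 \<and> (\<forall>m\<ge>1. norm (b m n) \<le> Bc n)" by blast
  have Bc: "Bc n \<ge> 0 \<and> (\<forall>m\<ge>1. norm (b m n) \<le> Bc n)" if "n \<ge> 1" for n using Bc' that by blast
  define B where "B = 4 + (\<Sum>m\<in>{1..N0}. Br m) + (\<Sum>n\<in>{1..N0}. Bc n)"
  have sr: "0 \<le> (\<Sum>m\<in>{1..N0}. Br m)" using Br by (intro sum_nonneg) auto
  have sc: "0 \<le> (\<Sum>n\<in>{1..N0}. Bc n)" using Bc by (intro sum_nonneg) auto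
  have "norm (b m n) \<le> B" if mn: "m \<ge> 1" "n \<ge> 1" for m n
  proof (cases "m \<le> N0")
    case True
    have "norm (b m n) \<le> Br m" using Br mn by blast
    also have "\<dots> \<le> (\<Sum>m\<in>{1..N0}. Br m)" using True mn Br by (intro member_le_sum) auto
    finally show ?thesis unfolding B_def using sc by linarith
  next
    case False
    note m = False
    show ?thesis
    proof (cases "n \<le> N0")
      case True
      have "norm (b m n) \<le> Bc n" using Bc mn by blast
      also have "\<dots> \<le> (\<Sum>n\<in>{1..N0}. Bc n)" using True mn Bc by (intro member_le_sum) auto
      finally show ?thesis unfolding B_def using sr by linarith
    next
      case False
      have d1: "dist (rect_sum b (m, n)) L < 1" using N0[of n m] m False by auto
      have d2: "dist (rect_sum b (m - 1, n)) L < 1" using N0[of n "m - 1"] m False by auto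
      have d3: "dist (rect_sum b (m, n - 1)) L < 1" using N0[of "n - 1" m] m False by auto
      have d4: "dist (rect_sum b (m - 1, n - 1)) L < 1" using N0[of "n - 1" "m - 1"] m False by auto
      have "b m n = (rect_sum b (m, n) - L) - (rect_sum b (m - 1, n) - L) - (rect_sum b (m, n - 1) - L) + (rect_sum b (m - 1, n - 1) - L)"
        using rect_sum_term[OF mn, of b] by (simp add: algebra_simps)
      then have "norm (b m n) \<le> norm (rect_sum b (m, n) - L) + norm (rect_sum b (m - 1, n) - L) + norm (rect_sum b (m, n - 1) - L) + norm (rect_sum b (m - 1, n - 1) - L)"
        by (simp only: norm4)
      also have "\<dots> < 4" using d1 d2 d3 d4 by (simp add: dist_norm)
      finally show ?thesis unfolding B_def using sr sc by linarith
    qed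
  qed
  then show ?thesis by blast
qed

lemma DC2:
  fixes g :: "nat \<Rightarrow> nat \<times> nat \<Rightarrow> complex" and G :: "nat \<times> nat \<Rightarrow> complex" and w :: "nat \<times> nat \<Rightarrow> real"
  assumes w: "integrable (count_space UNIV) w"
    and bnd: "\<And>J p. norm (g J p) \<le> w p"
    and pw: "\<And>p. (\<lambda>J. g J p) \<longlonglongrightarrow> G p"
  shows "(\<lambda>J. integral\<^sup>L (count_space UNIV) (g J)) \<longlonglongrightarrow> integral\<^sup>L (count_space UNIV) G"
  by (rule integral_dominated_convergence[OF _ _ w]) (auto simp: AE_count_space bnd pw)

lemma int_box:
  fixes \<phi> :: "nat \<times> nat \<Rightarrow> complex"
  assumes "finite S"
  shows "integral\<^sup>L (count_space UNIV) (\<lambda>p. indicator S p *\<^sub>R \<phi> p) = sum \<phi> S"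
  using infsetsum_altdef[of \<phi> S] infsetsum_finite[OF assms, of \<phi>] unfolding set_lebesgue_integral_def by simp

lemma DCmain:
  fixes g :: "nat \<Rightarrow> nat \<Rightarrow> nat \<Rightarrow> complex" and G :: "nat \<Rightarrow> nat \<Rightarrow> complex"
    and Y :: "nat \<Rightarrow> nat \<Rightarrow> real" and Q :: "nat \<Rightarrow> complex" and F :: "nat set"
  assumes Yint: "integrable (count_space UNIV) (\<lambda>p. Y (fst p) (snd p))"
    and bnd: "\<And>J m n. m \<ge> 1 \<Longrightarrow> n \<ge> 1 \<Longrightarrow> norm (g J m n) \<le> Y m n"
    and pw: "\<And>m n. m \<ge> 1 \<Longrightarrow> n \<ge> 1 \<Longrightarrow> (\<lambda>J. g J m n) \<longlonglongrightarrow> G m n"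
    and Ql: "\<And>J. (\<lambda>N. \<Sum>m\<in>{1..N}. \<Sum>n\<in>{1..N}. g J m n) \<longlonglongrightarrow> Q J"
    and F: "finite F" "F \<subseteq> {1..}"
    and Gs: "\<And>m n. m \<ge> 1 \<Longrightarrow> n \<ge> 1 \<Longrightarrow> m \<notin> F \<or> n \<notin> F \<Longrightarrow> G m n = 0"
  shows "Q \<longlonglongrightarrow> (\<Sum>m\<in>F. \<Sum>n\<in>F. G m n)"
proof -
  define I where "I = {p :: nat \<times> nat. fst p \<ge> 1 \<and> snd p \<ge> 1}"
  define h where "h J p = indicator I p *\<^sub>R g J (fst p) (snd p)" for J p
  define H where "H p = indicator I p *\<^sub>R G (fst p) (snd p)" for p
  define w where "w p = Y (fst p) (snd p) * indicator I p" for p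
  have wint: "integrable (count_space UNIV) w" unfolding w_def
    by (rule integrable_real_mult_indicator) (use Yint in auto)
  have hb: "norm (h J p) \<le> w p" for J p
    unfolding h_def w_def I_def indicator_def using bnd[of "fst p" "snd p" J] by auto
  have Qint: "Q J = integral\<^sup>L (count_space UNIV) (h J)" for J
  proof -
    define S where "S N = {1..N} \<times> {1..N}" for N :: nat
    define s where "s N p = indicator (S N) p *\<^sub>R g J (fst p) (snd p)" for N p
    have sI: "S N \<subseteq> I" for N unfolding S_def I_def by auto
    have "(\<lambda>N. integral\<^sup>L (count_space UNIV) (s N)) \<longlonglongrightarrow> integral\<^sup>L (count_space UNIV) (h J)"
    proof (rule DC2[OF wint])
      show "norm (s N p) \<le> w p" for N p
      proof (cases "p \<in> S N")
        case True then have "p \<in> I" using sI by auto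
        then show ?thesis using True hb[of J p] unfolding s_def h_def by simp
      next
        case False then show ?thesis unfolding s_def w_def using bnd[of "fst p" "snd p" J] 
          by (auto simp: indicator_def I_def intro: order_trans[OF norm_ge_zero])
      qed
      show "(\<lambda>N. s N p) \<longlonglongrightarrow> h J p" for p
      proof (cases "p \<in> I")
        case True
        have "eventually (\<lambda>N. s N p = h J p) sequentially"
          unfolding eventually_sequentially
        proof (intro exI[of _ "max (fst p) (snd p)"] allI impI)
          fix N assume "max (fst p) (snd p) \<le> N"
          then have "p \<in> S N" using True unfolding S_def I_def by (cases p) auto
          then show "s N p = h J p" using True unfolding s_def h_def by simp
        qed
        then show ?thesis by (rule tendsto_eventually)
      next
        case False
        then have "s N p = h J p" for N using sI[of N] unfolding s_def h_def indicator_def by auto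
        then show ?thesis by simp
      qed
    qed
    moreover have "integral\<^sup>L (count_space UNIV) (s N) = (\<Sum>m\<in>{1..N}. \<Sum>n\<in>{1..N}. g J m n)" for N
    proof -
      have "integral\<^sup>L (count_space UNIV) (s N) = (\<Sum>p\<in>S N. g J (fst p) (snd p))"
        unfolding s_def by (rule int_box) (simp add: S_def)
      also have "\<dots> = (\<Sum>m\<in>{1..N}. \<Sum>n\<in>{1..N}. g J m n)"
        unfolding S_def by (simp add: sum.cartesian_product case_prod_beta)
      finally show ?thesis .
    qed
    ultimately have "(\<lambda>N. \<Sum>m\<in>{1..N}. \<Sum>n\<in>{1..N}. g J m n) \<longlonglongrightarrow> integral\<^sup>L (count_space UNIV) (h J)" by simp
    with Ql[of J] show ?thesis using LIMSEQ_unique by blast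
  qed
  have "(\<lambda>J. integral\<^sup>L (count_space UNIV) (h J)) \<longlonglongrightarrow> integral\<^sup>L (count_space UNIV) H"
  proof (rule DC2[OF wint hb])
    show "(\<lambda>J. h J p) \<longlonglongrightarrow> H p" for p
      unfolding h_def H_def I_def indicator_def using pw[of "fst p" "snd p"] by auto
  qed
  moreover have "integral\<^sup>L (count_space UNIV) H = (\<Sum>m\<in>F. \<Sum>n\<in>F. G m n)"
  proof -
    have "H = (\<lambda>p. indicator (F \<times> F) p *\<^sub>R G (fst p) (snd p))"
    proof (rule ext)
      fix p :: "nat \<times> nat"
      show "H p = indicator (F \<times> F) p *\<^sub>R G (fst p) (snd p)"
        using Gs[of "fst p" "snd p"] F(2) unfolding H_def I_def indicator_def by (cases p) auto
    qed
    then have "integral\<^sup>L (count_space UNIV) H = (\<Sum>p\<in>F \<times> F. G (fst p) (snd p))"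
      using int_box[of "F \<times> F" "\<lambda>p. G (fst p) (snd p)"] F(1) by simp
    then show ?thesis by (simp add: sum.cartesian_product case_prod_beta)
  qed
  ultimately show ?thesis unfolding Qint[abs_def] by simp
qed

lemma avg_lim:
  fixes q :: complex
  assumes "norm q = 1"
  shows "(\<lambda>J. (1 / of_nat J) * (\<Sum>j<J. q ^ j)) \<longlonglongrightarrow> (if q = 1 then 1 else 0)"
proof (cases "q = 1")
  case True
  have "eventually (\<lambda>J. (1 / of_nat J) * (\<Sum>j<J. q ^ j) = (1::complex)) sequentially"
    unfolding eventually_sequentially using True by (intro exI[of _ 1]) auto
  then show ?thesis using True by (simp add: tendsto_eventually)
next
  case False
  have bnd: "norm ((1 / of_nat J) * (\<Sum>j<J. q ^ j)) \<le> (2 / norm (1 - q)) * (1 / real J)" for J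
  proof -
    have e: "(\<Sum>j<J. q ^ j) = (1 - q ^ J) / (1 - q)" using False by (simp add: sum_gp_strict)
    have n2: "norm (1 - q ^ J) \<le> 2"
    proof -
      have "norm (1 - q ^ J) \<le> norm (1::complex) + norm (q ^ J)" by (rule norm_triangle_ineq4)
      also have "\<dots> = 2" using assms by (simp add: norm_power)
      finally show ?thesis .
    qed
    have qp: "norm (1 - q) > 0" using False by simp
    have S: "norm (\<Sum>j<J. q ^ j) \<le> 2 / norm (1 - q)"
      unfolding e norm_divide using n2 qp by (intro divide_right_mono) auto
    have "norm ((1 / of_nat J) * (\<Sum>j<J. q ^ j)) = (1 / real J) * norm (\<Sum>j<J. q ^ j)"
      by (simp add: norm_mult norm_divide)
    also have "\<dots> \<le> (1 / real J) * (2 / norm (1 - q))"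
      using mult_left_mono[OF S, of "1 / real J"] by simp
    finally show ?thesis by (simp add: mult.commute)
  qed
  have "(\<lambda>J. (2 / norm (1 - q)) * (1 / real J)) \<longlonglongrightarrow> (2 / norm (1 - q)) * 0"
    by (intro tendsto_mult tendsto_const lim_const_over_n)
  then have lim0: "(\<lambda>J. (2 / norm (1 - q)) * (1 / real J)) \<longlonglongrightarrow> 0" by simp
  have "(\<lambda>J. norm ((1 / of_nat J) * (\<Sum>j<J. q ^ j))) \<longlonglongrightarrow> 0"
  proof (rule tendsto_sandwich[of "\<lambda>_. 0" _ _ "\<lambda>J. (2 / norm (1 - q)) * (1 / real J)"])
    show "eventually (\<lambda>J. 0 \<le> norm ((1 / of_nat J) * (\<Sum>j<J. q ^ j))) sequentially" by simp
    show "eventually (\<lambda>J. norm ((1 / of_nat J) * (\<Sum>j<J. q ^ j)) \<le> (2 / norm (1 - q)) * (1 / real J)) sequentially"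
      using bnd by (intro always_eventually allI) 
    show "(\<lambda>_. 0) \<longlonglongrightarrow> (0::real)" by simp
    show "(\<lambda>J. (2 / norm (1 - q)) * (1 / real J)) \<longlonglongrightarrow> 0" by (rule lim0)
  qed
  then show ?thesis using False by (simp add: tendsto_norm_zero_iff)
qed

lemma h_exists:
  "\<exists>h>0. \<forall>n p. n \<ge> 1 \<longrightarrow> p \<ge> 1 \<longrightarrow> n \<noteq> p \<longrightarrow>
      exp (\<i> * of_real (h * (ln (real n) - ln (real p)))) \<noteq> 1"
proof -
  define Bad where "Bad = (\<lambda>(n, p, k). 2 * pi * real_of_int k / (ln (real n) - ln (real p))) ` (UNIV :: (nat \<times> nat \<times> int) set)"
  have cB: "countable Bad" unfolding Bad_def by simp
  have "uncountable {0<..<(1::real)}" by (simp add: uncountable_open_interval)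
  then have "\<not> {0<..<(1::real)} \<subseteq> Bad" using cB countable_subset by blast
  then obtain h where h: "h \<in> {0<..<1}" "h \<notin> Bad" by blast
  have "exp (\<i> * of_real (h * (ln (real n) - ln (real p)))) \<noteq> 1" if np: "n \<ge> 1" "p \<ge> 1" "n \<noteq> p" for n p
  proof
    assume "exp (\<i> * of_real (h * (ln (real n) - ln (real p)))) = 1"
    then obtain k :: int where k: "h * (ln (real n) - ln (real p)) = of_int (2 * k) * pi"
      unfolding exp_eq_1 by auto
    have "ln (real n) \<noteq> ln (real p)" using np by simp
    then have "h = 2 * pi * real_of_int k / (ln (real n) - ln (real p))"
      using k by (simp add: field_simps)
    then have "h \<in> Bad" unfolding Bad_def by (intro image_eqI[of _ _ "(n, p, k)"]) auto
    with h show False by blast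
  qed
  then show ?thesis using h by (intro exI[of _ h]) auto
qed

lemma pw_point:
  assumes "n \<ge> 1"
  shows "of_nat n powr (- cnj (of_real \<sigma> + \<i> * of_real (h * real j))) =
         of_real (real n powr (- \<sigma>)) * exp (\<i> * of_real (h * ln (real n))) ^ j"
proof -
  have n0: "(of_nat n :: complex) \<noteq> 0" "real n > 0" using assms by auto
  have "of_nat n powr (- cnj (of_real \<sigma> + \<i> * of_real (h * real j))) =
        exp ((- of_real \<sigma> + \<i> * of_real (h * real j)) * of_real (ln (real n)))"
    unfolding powr_def using n0 by simp
  also have "(- of_real \<sigma> + \<i> * of_real (h * real j)) * of_real (ln (real n)) =
             of_real (- \<sigma> * ln (real n)) + of_nat j * (\<i> * of_real (h * ln (real n)))"
    by (simp add: algebra_simps)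
  also have "exp \<dots> = exp (of_real (- \<sigma> * ln (real n))) * exp (\<i> * of_real (h * ln (real n))) ^ j"
    by (simp only: exp_add exp_of_nat_mult)
  also have "exp (of_real (- \<sigma> * ln (real n))) = (of_real (real n powr (- \<sigma>)) :: complex)"
    by (subst exp_of_real) (use n0 in \<open>simp add: powr_def\<close>)
  finally show ?thesis .
qed

lemma Yint:
  "integrable (count_space UNIV) (\<lambda>p::nat \<times> nat. K * (real (fst p) powr (-2) * real (snd p) powr (-2)))"
proof -
  define u where "u n = real n powr (-2)" for n :: nat
  have u0: "u n \<ge> 0" for n unfolding u_def by simp
  have su: "summable u" unfolding u_def using summable_real_powr_iff[of "-2"] by simp
  have iu: "integrable (count_space UNIV) u"
    unfolding integrable_count_space_nat_iff using su u0 by simp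
  have "integrable (count_space (Sigma UNIV (\<lambda>_. UNIV))) (\<lambda>p::nat \<times> nat. u (fst p) * u (snd p))"
  proof (subst Infinite_Set_Sum.abs_summable_on_Sigma_iff[unfolded Infinite_Set_Sum.abs_summable_on_def])
    show "countable (UNIV :: nat set)" by simp
    show "countable (UNIV :: nat set)" if "x \<in> UNIV" for x :: nat by simp
    have "(\<lambda>x. infsetsum (\<lambda>y. norm (u (fst (x, y)) * u (snd (x, y)))) UNIV) = (\<lambda>x. u x * infsetsum u UNIV)"
    proof (rule ext)
      fix x
      have "infsetsum (\<lambda>y. norm (u (fst (x, y)) * u (snd (x, y)))) UNIV = infsetsum (\<lambda>y. u x * u y) UNIV"
        using u0 by (simp add: abs_mult)
      also have "\<dots> = u x * infsetsum u UNIV"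
        by (rule infsetsum_cmult_right) (use iu in \<open>simp add: Infinite_Set_Sum.abs_summable_on_def\<close>)
      finally show "infsetsum (\<lambda>y. norm (u (fst (x, y)) * u (snd (x, y)))) UNIV = u x * infsetsum u UNIV" .
    qed
    then show "(\<forall>x\<in>UNIV. integrable (count_space UNIV) (\<lambda>y. u (fst (x, y)) * u (snd (x, y)))) \<and>
      integrable (count_space UNIV) (\<lambda>x. infsetsum (\<lambda>y. norm (u (fst (x, y)) * u (snd (x, y)))) UNIV)"
      using iu by auto
  qed
  then show ?thesis unfolding u_def by simp
qed



lemma avg_norm_le:
  fixes q :: complex
  assumes "norm q = 1"
  shows "norm ((1 / of_nat J) * (\<Sum>j<J. q ^ j)) \<le> 1"
proof (cases "J = 0")
  case True then show ?thesis by simp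
next
  case False
  have "norm (\<Sum>j<J. q ^ j) \<le> (\<Sum>j<J. norm (q ^ j))" by (rule norm_sum)
  also have "\<dots> = real J" using assms by (simp add: norm_power)
  finally have "norm (\<Sum>j<J. q ^ j) \<le> real J" .
  then show ?thesis using False by (simp add: norm_mult norm_divide field_simps)
qed

lemma B2:
  assumes ker: "dirichlet_series_kernel \<rho> a" and sf: "\<forall>s\<in>halfplane \<rho>. summable1 (dir_term fh s)"
    and psd: "psd_kernel (halfplane \<rho>) (\<lambda>s u. of_real C * dkernel a s u - suminf1 (dir_term fh s) * cnj (suminf1 (dir_term fh u)))"
  shows "formally_psd (xm C a fh)"
  unfolding formally_psd_def
proof (intro allI impI)
  fix F :: "nat set" and v :: "nat \<Rightarrow> complex"
  assume F: "finite F \<and> F \<subseteq> {1..}"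
  define \<sigma>0 where "\<sigma>0 = \<rho> + 1"
  define \<sigma> where "\<sigma> = \<rho> + 3"
  define f where "f s = suminf1 (dir_term fh s)" for s
  define L where "L u t = of_real C * dkernel a u t - f u * cnj (f t)" for u t
  have s0D: "complex_of_real \<sigma>0 \<in> halfplane \<rho>" unfolding halfplane_def \<sigma>0_def by simp
  
  have "regularly_convergent (dk_term a (of_real \<sigma>0) (cnj (of_real \<sigma>0)))"
    using ker s0D unfolding dirichlet_series_kernel_def by blast
  then obtain Ba where Ba: "\<And>m n. m \<ge> 1 \<Longrightarrow> n \<ge> 1 \<Longrightarrow> norm (dk_term a (of_real \<sigma>0) (of_real \<sigma>0) m n) \<le> Ba"
    using rc_bounded by fastforce
  obtain Bf where Bf: "Bf \<ge> 0" "\<And>n. n \<ge> 1 \<Longrightarrow> norm (dir_term fh (of_real \<sigma>0) n) \<le> Bf"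
    using summable1_bounded[OF sf[rule_format, OF s0D]] by blast
  have abnd: "norm (a m n) \<le> Ba * (real m powr \<sigma>0 * real n powr \<sigma>0)" if "m \<ge> 1" "n \<ge> 1" for m n
  proof -
    have "norm (dk_term a (of_real \<sigma>0) (of_real \<sigma>0) m n) = norm (a m n) * (real m powr (- \<sigma>0) * real n powr (- \<sigma>0))"
      unfolding dk_term_def using that by (simp add: norm_mult norm_pw)
    with Ba[OF that] have "norm (a m n) * (real m powr (- \<sigma>0) * real n powr (- \<sigma>0)) \<le> Ba" by simp
    moreover have "real m powr (- \<sigma>0) * real n powr (- \<sigma>0) > 0" using that by simp
    ultimately show ?thesis using that by (simp add: powr_minus field_simps)
  qed
  have fbnd: "norm (fh n) \<le> Bf * real n powr \<sigma>0" if "n \<ge> 1" for n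
  proof -
    have "norm (dir_term fh (of_real \<sigma>0) n) = norm (fh n) * real n powr (- \<sigma>0)"
      unfolding dir_term_def using that by (simp add: norm_mult norm_pw)
    with Bf(2)[OF that] have "norm (fh n) * real n powr (- \<sigma>0) \<le> Bf" by simp
    then show ?thesis using that by (simp add: powr_minus field_simps)
  qed
  define B1 where "B1 = \<bar>C\<bar> * \<bar>Ba\<bar> + Bf * Bf"
  have B1: "B1 \<ge> 0" unfolding B1_def by simp
  have xbnd: "norm (xm C a fh m n) \<le> B1 * (real m powr \<sigma>0 * real n powr \<sigma>0)" if "m \<ge> 1" "n \<ge> 1" for m n
  proof -
    have "norm (xm C a fh m n) \<le> norm (complex_of_real C * a m n) + norm (fh m * cnj (fh n))"
      unfolding xm_def by (rule norm_triangle_ineq4)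
    also have "norm (complex_of_real C * a m n) \<le> \<bar>C\<bar> * (\<bar>Ba\<bar> * (real m powr \<sigma>0 * real n powr \<sigma>0))"
    proof -
      have "norm (a m n) \<le> \<bar>Ba\<bar> * (real m powr \<sigma>0 * real n powr \<sigma>0)"
        using abnd[OF that] by (rule order_trans) (intro mult_right_mono, auto)
      then show ?thesis by (simp add: norm_mult mult_left_mono)
    qed
    also have "norm (fh m * cnj (fh n)) \<le> (Bf * real m powr \<sigma>0) * (Bf * real n powr \<sigma>0)"
      unfolding norm_mult complex_mod_cnj using fbnd that Bf(1) by (intro mult_mono) auto
    finally show ?thesis unfolding B1_def by (simp add: algebra_simps)
  qed
  
  obtain h where h0: "h > 0" and hgood: "\<And>n p. n \<ge> 1 \<Longrightarrow> p \<ge> 1 \<Longrightarrow> n \<noteq> p \<Longrightarrow>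
      exp (\<i> * of_real (h * (ln (real n) - ln (real p)))) \<noteq> 1"
    using h_exists by blast
  define wp where "wp p = v p * of_real (real p powr \<sigma>)" for p
  define W where "W = (\<Sum>p\<in>F. norm (wp p))"
  have W0: "W \<ge> 0" unfolding W_def by (simp add: sum_nonneg)
  define zz where "zz n = exp (\<i> * of_real (h * ln (real n)))" for n :: nat
  define q where "q p n = cnj (zz p) * zz n" for p n
  define avg where "avg J z = (1 / of_nat J) * (\<Sum>j<J. z ^ j)" for J :: nat and z :: complex
  define coef where "coef J j = (1 / of_nat J) * (\<Sum>p\<in>F. wp p * cnj (zz p) ^ j)" for J j :: nat
  define tt where "tt j = of_real \<sigma> + \<i> * of_real (h * real j)" for j :: nat
  define cc where "cc J t = coef J (nat \<lfloor>Im t / h\<rfloor>)" for J t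
  define P where "P J = tt ` {..<J}" for J
  define V where "V J n = (\<Sum>t\<in>P J. cc J t * of_nat n powr (- cnj t))" for J n
  define v' where "v' n = (if n \<in> F then v n else 0)" for n
  have inj: "inj_on tt {..<J}" for J
    unfolding inj_on_def tt_def using h0 by (auto simp: complex_eq_iff)
  have cc_tt: "cc J (tt j) = coef J j" for J j
    unfolding cc_def tt_def using h0 by simp
  have qnorm: "norm (q p n) = 1" for p n unfolding q_def zz_def by (simp add: norm_mult)
  have q1: "q p n = 1 \<longleftrightarrow> p = n" if "p \<ge> 1" "n \<ge> 1" for p n
  proof
    assume "p = n"
    then show "q p n = 1" unfolding q_def zz_def
      by (simp add: exp_cnj exp_add[symmetric])
  next
    assume e: "q p n = 1"
    have "q p n = exp (\<i> * of_real (h * (ln (real n) - ln (real p))))"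
      unfolding q_def zz_def by (simp add: exp_cnj exp_add[symmetric] algebra_simps)
    then show "p = n" using e hgood[OF that(2) that(1)] by metis
  qed
  have Vform: "V J n = of_real (real n powr (- \<sigma>)) * (\<Sum>p\<in>F. wp p * avg J (q p n))" if n: "n \<ge> 1" for J n
  proof -
    have "V J n = (\<Sum>j<J. cc J (tt j) * of_nat n powr (- cnj (tt j)))"
      unfolding V_def P_def by (rule sum.reindex[OF inj, unfolded comp_def])
    also have "\<dots> = (\<Sum>j<J. coef J j * (of_real (real n powr (- \<sigma>)) * zz n ^ j))"
      unfolding cc_tt unfolding tt_def zz_def pw_point[OF n] ..
    also have "\<dots> = of_real (real n powr (- \<sigma>)) * (\<Sum>j<J. (1 / of_nat J) * (\<Sum>p\<in>F. wp p * q p n ^ j))"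
      unfolding coef_def q_def
      by (simp add: sum_distrib_left sum_distrib_right power_mult_distrib mult_ac)
    also have "(\<Sum>j<J. (1 / of_nat J) * (\<Sum>p\<in>F. wp p * q p n ^ j)) = (\<Sum>p\<in>F. wp p * avg J (q p n))"
      unfolding avg_def by (simp add: sum_distrib_left mult_ac sum.swap[of _ "{..<J}"])
    finally show ?thesis .
  qed
  have Vlim: "(\<lambda>J. V J n) \<longlonglongrightarrow> v' n" if n: "n \<ge> 1" for n
  proof -
    have "(\<lambda>J. \<Sum>p\<in>F. wp p * avg J (q p n)) \<longlonglongrightarrow> (\<Sum>p\<in>F. wp p * (if q p n = 1 then 1 else 0))"
      unfolding avg_def by (intro tendsto_sum tendsto_mult tendsto_const avg_lim qnorm)
    also have "(\<Sum>p\<in>F. wp p * (if q p n = 1 then 1 else 0)) = (\<Sum>p\<in>F. if p = n then wp p else 0)"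
      using F n q1 by (intro sum.cong refl) auto
    also have "\<dots> = (if n \<in> F then wp n else 0)" using F by (simp add: sum.delta')
    finally have "(\<lambda>J. of_real (real n powr (- \<sigma>)) * (\<Sum>p\<in>F. wp p * avg J (q p n))) \<longlonglongrightarrow>
        of_real (real n powr (- \<sigma>)) * (if n \<in> F then wp n else 0)"
      by (intro tendsto_mult tendsto_const)
    moreover have "of_real (real n powr (- \<sigma>)) * (if n \<in> F then wp n else 0) = v' n"
      unfolding v'_def wp_def using n by (simp add: powr_minus field_simps)
    ultimately show ?thesis using Vform[OF n] by simp
  qed
  have Vbnd: "norm (V J n) \<le> real n powr (- \<sigma>) * W" if n: "n \<ge> 1" for J n
  proof -
    have "norm (\<Sum>p\<in>F. wp p * avg J (q p n)) \<le> (\<Sum>p\<in>F. norm (wp p * avg J (q p n)))" by (rule norm_sum)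
    also have "\<dots> \<le> (\<Sum>p\<in>F. norm (wp p))"
    proof (rule sum_mono)
      fix p assume "p \<in> F"
      have "norm (avg J (q p n)) \<le> 1" unfolding avg_def by (rule avg_norm_le[OF qnorm])
      then show "norm (wp p * avg J (q p n)) \<le> norm (wp p)"
        unfolding norm_mult by (simp add: mult_left_le)
    qed
    finally have "norm (\<Sum>p\<in>F. wp p * avg J (q p n)) \<le> W" unfolding W_def .
    then show ?thesis unfolding Vform[OF n] norm_mult using n
      by (simp add: mult_left_mono)
  qed
  
  have PD: "P J \<subseteq> halfplane \<rho>" for J unfolding P_def tt_def halfplane_def \<sigma>_def by auto
  have Pfin: "finite (P J)" for J unfolding P_def by simp
  define Q where "Q J = (\<Sum>t\<in>P J. \<Sum>u\<in>P J. cc J t * cnj (cc J u) * L u t)" for J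
  have Qnn: "cnonneg (Q J)" for J
    using psdD[OF psd Pfin PD, of "cc J"] unfolding Q_def L_def f_def .
  have Ql: "(\<lambda>N. \<Sum>m\<in>{1..N}. \<Sum>n\<in>{1..N}. cnj (V J m) * xm C a fh m n * V J n) \<longlonglongrightarrow> Q J" for J
  proof -
    have lim_ut: "(\<lambda>N. \<Sum>m\<in>{1..N}. \<Sum>n\<in>{1..N}. xt (xm C a fh) u t m n) \<longlonglongrightarrow> L u t"
      if "u \<in> P J" "t \<in> P J" for u t
    proof -
      have "u \<in> halfplane \<rho>" "t \<in> halfplane \<rho>" using that PD by auto
      from diag_lim[OF xt_lim[OF ker this sf[rule_format, OF this(1)] sf[rule_format, OF this(2)]]]
      show ?thesis unfolding rect_diag L_def f_def .
    qed
    have "(\<lambda>N. \<Sum>t\<in>P J. \<Sum>u\<in>P J. cc J t * cnj (cc J u) * (\<Sum>m\<in>{1..N}. \<Sum>n\<in>{1..N}. xt (xm C a fh) u t m n))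
        \<longlonglongrightarrow> Q J"
      unfolding Q_def by (intro tendsto_sum tendsto_mult tendsto_const lim_ut)
    then show ?thesis unfolding fin_ident V_def .
  qed
  have "Q \<longlonglongrightarrow> (\<Sum>m\<in>F. \<Sum>n\<in>F. cnj (v' m) * xm C a fh m n * v' n)"
  proof (rule DCmain[OF Yint[of "W * W * B1"] _ _ Ql])
    show "norm (cnj (V J m) * xm C a fh m n * V J n) \<le> W * W * B1 * (real m powr (-2) * real n powr (-2))"
      if "m \<ge> 1" "n \<ge> 1" for J m n
    proof -
      have "norm (cnj (V J m) * xm C a fh m n * V J n) = norm (V J m) * norm (xm C a fh m n) * norm (V J n)"
        by (simp add: norm_mult)
      also have "\<dots> \<le> (real m powr (- \<sigma>) * W) * (B1 * (real m powr \<sigma>0 * real n powr \<sigma>0)) * (real n powr (- \<sigma>) * W)"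
        using Vbnd[OF that(1), of J] Vbnd[OF that(2), of J] xbnd[OF that] W0 B1
        by (intro mult_mono) (auto intro!: mult_nonneg_nonneg)
      also have "\<dots> = W * W * B1 * ((real m powr (- \<sigma>) * real m powr \<sigma>0) * (real n powr (- \<sigma>) * real n powr \<sigma>0))"
        by (simp add: mult_ac)
      also have "real m powr (- \<sigma>) * real m powr \<sigma>0 = real m powr (-2)"
        unfolding powr_add[symmetric] \<sigma>_def \<sigma>0_def by simp
      also have "real n powr (- \<sigma>) * real n powr \<sigma>0 = real n powr (-2)"
        unfolding powr_add[symmetric] \<sigma>_def \<sigma>0_def by simp
      finally show ?thesis .
    qed
    show "(\<lambda>J. cnj (V J m) * xm C a fh m n * V J n) \<longlonglongrightarrow> cnj (v' m) * xm C a fh m n * v' n"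
      if "m \<ge> 1" "n \<ge> 1" for m n
      by (intro tendsto_mult tendsto_cnj tendsto_const Vlim that)
    show "finite F" "F \<subseteq> {1..}" using F by auto
    show "cnj (v' m) * xm C a fh m n * v' n = 0" if "m \<ge> 1" "n \<ge> 1" "m \<notin> F \<or> n \<notin> F" for m n
      using that unfolding v'_def by auto
  qed
  moreover have "(\<Sum>m\<in>F. \<Sum>n\<in>F. cnj (v' m) * xm C a fh m n * v' n) = (\<Sum>m\<in>F. \<Sum>n\<in>F. cnj (v m) * xm C a fh m n * v n)"
    unfolding v'_def by simp
  ultimately show "cnonneg (\<Sum>m\<in>F. \<Sum>n\<in>F. cnj (v m) * xm C a fh m n * v n)"
    using cnonneg_lim[OF _ Qnn] by simp
qed


theorem corollary2p8:
  fixes \<rho> :: real and a :: "nat \<Rightarrow> nat \<Rightarrow> complex" and fh :: "nat \<Rightarrow> complex"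
  assumes "dirichlet_series_kernel \<rho> a"
    and "psd_kernel (halfplane \<rho>) (dkernel a)"
    and "\<forall>s\<in>halfplane \<rho>. summable1 (dir_term fh s)"
  shows "in_rkhs (halfplane \<rho>) (dkernel a) (\<lambda>s. suminf1 (dir_term fh s)) \<longleftrightarrow>
         (\<exists>c::real. c \<ge> 0 \<and>
            formally_psd (\<lambda>m n. complex_of_real (c\<^sup>2) * a m n - fh m * cnj (fh n)))"
proof -
  have step1: "in_rkhs (halfplane \<rho>) (dkernel a) (\<lambda>s. suminf1 (dir_term fh s)) \<longleftrightarrow>
      (\<exists>C\<ge>0. psd_kernel (halfplane \<rho>) (\<lambda>s u. of_real C * dkernel a s u - suminf1 (dir_term fh s) * cnj (suminf1 (dir_term fh u))))"
    using rkhs_iff[OF assms(2), of "\<lambda>s. suminf1 (dir_term fh s)"] by simp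
  have step2: "psd_kernel (halfplane \<rho>) (\<lambda>s u. of_real C * dkernel a s u - suminf1 (dir_term fh s) * cnj (suminf1 (dir_term fh u)))
      \<longleftrightarrow> formally_psd (xm C a fh)" for C
    using B1[OF assms(1) assms(3)] B2[OF assms(1) assms(3)] by blast
  have xm_eq: "xm (c\<^sup>2) a fh = (\<lambda>m n. complex_of_real (c\<^sup>2) * a m n - fh m * cnj (fh n))" for c
    unfolding xm_def by (intro ext) simp
  show ?thesis
  proof
    assume "in_rkhs (halfplane \<rho>) (dkernel a) (\<lambda>s. suminf1 (dir_term fh s))"
    then obtain C where C: "C \<ge> 0" "formally_psd (xm C a fh)" using step1 step2 by blast
    have "(sqrt C)\<^sup>2 = C" using C(1) by simp
    then have "formally_psd (xm ((sqrt C)\<^sup>2) a fh)" using C(2) by simp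
    then show "\<exists>c::real. c \<ge> 0 \<and> formally_psd (\<lambda>m n. complex_of_real (c\<^sup>2) * a m n - fh m * cnj (fh n))"
      unfolding xm_eq using C(1) by (intro exI[of _ "sqrt C"]) auto
  next
    assume "\<exists>c::real. c \<ge> 0 \<and> formally_psd (\<lambda>m n. complex_of_real (c\<^sup>2) * a m n - fh m * cnj (fh n))"
    then obtain c :: real where c: "c \<ge> 0" "formally_psd (xm (c\<^sup>2) a fh)" unfolding xm_eq[symmetric] by blast
    have "psd_kernel (halfplane \<rho>) (\<lambda>s u. of_real (c\<^sup>2) * dkernel a s u - suminf1 (dir_term fh s) * cnj (suminf1 (dir_term fh u)))"
      using step2[of "c\<^sup>2"] c(2) by blast
    then show "in_rkhs (halfplane \<rho>) (dkernel a) (\<lambda>s. suminf1 (dir_term fh s))"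
      using step1 zero_le_power2[of c] by blast
  qed
qed

end
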